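(* Let $P$ be a finite abelian $p$-group. Then $\mathrm{Perf}(\mathcal{O}P)\cong \mathrm{Aut}(\mathcal{O}P)\times C_2$.
   Context: $(K,\mathcal{O},k)$ is a $p$-modular system with $k$ algebraically closed of characteristic $p$. For a block $B$, $\mathrm{Perf}(B)$ is the group (under composition) of perfect self-isometries of $B$ in the sense of Broué: isometries $I:\mathbb{Z}\mathrm{Irr}(B)\to\mathbb{Z}\mathrm{Irr}(B)$ whose associated generalized character $\mu(g,h)=\sum_{\chi}I(\chi)(g)\chi(h^{-1})$ is perfect. $\mathrm{Aut}(\mathcal{O}P)$ is the group of $\mathcal{O}$-algebra automorphisms of $\mathcal{O}P$. *)

theory Defs
  imports "HOL-Algebra.Algebra"
begin

text \<open>K is the type 'k (a field of characteristic 0), equipped with a discrete valuation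
  v (defined on nonzero elements, surjective onto the integers), complete with respect to v.
  \<O> is its valuation ring, and the residue field k = \<O>/m is algebraically closed of
  characteristic p.\<close>

definition p_modular_system :: "nat \<Rightarrow> ('k::field_char_0 \<Rightarrow> int) \<Rightarrow> 'k set \<Rightarrow> bool" where
  "p_modular_system p v \<O> \<longleftrightarrow>
     Factorial_Ring.prime p \<and>
     (\<forall>x y. x \<noteq> 0 \<longrightarrow> y \<noteq> 0 \<longrightarrow> v (x * y) = v x + v y) \<and>
     (\<forall>x y. x \<noteq> 0 \<longrightarrow> y \<noteq> 0 \<longrightarrow> x + y \<noteq> 0 \<longrightarrow> v (x + y) \<ge> min (v x) (v y)) \<and>
     (\<exists>\<pi>. \<pi> \<noteq> 0 \<and> v \<pi> = 1) \<and>
     \<O> = {x. x = 0 \<or> v x \<ge> 0} \<and>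
     (\<forall>(xs :: nat \<Rightarrow> 'k).
        (\<forall>N. \<exists>M. \<forall>m\<ge>M. \<forall>n\<ge>M. xs m = xs n \<or> v (xs m - xs n) \<ge> N) \<longrightarrow>
        (\<exists>L. \<forall>N. \<exists>M. \<forall>n\<ge>M. xs n = L \<or> v (xs n - L) \<ge> N)) \<and>
     v (of_nat p) > 0 \<and>
     (\<forall>(c :: nat \<Rightarrow> 'k) n. n \<ge> 1 \<longrightarrow> (\<forall>i<n. c i \<in> \<O>) \<longrightarrow>
        (\<exists>a\<in>\<O>. let f = a ^ n + (\<Sum>i<n. c i * a ^ i) in f = 0 \<or> v f > 0))"

definition centralizer_grp :: "('g, 'b) monoid_scheme \<Rightarrow> 'g \<Rightarrow> 'g set" where
  "centralizer_grp G g = {h \<in> carrier G. h \<otimes>\<^bsub>G\<^esub> g = g \<otimes>\<^bsub>G\<^esub> h}"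

definition p_regular :: "nat \<Rightarrow> ('g, 'b) monoid_scheme \<Rightarrow> 'g \<Rightarrow> bool" where
  "p_regular p G g \<longleftrightarrow> coprime (group.ord G g) p"

text \<open>For an abelian group with K a splitting field, the irreducible K-characters are
  exactly the linear characters (homomorphisms into K^*). Class functions are extended by 0
  outside the carrier.\<close>

definition lin_chars :: "('g, 'b) monoid_scheme \<Rightarrow> ('g \<Rightarrow> 'k::field) set" where
  "lin_chars G = {\<chi>. (\<forall>x\<in>carrier G. \<forall>y\<in>carrier G. \<chi> (x \<otimes>\<^bsub>G\<^esub> y) = \<chi> x * \<chi> y)
                    \<and> \<chi> \<one>\<^bsub>G\<^esub> = 1 \<and> (\<forall>x. x \<notin> carrier G \<longrightarrow> \<chi> x = 0)}"

definition ZIrr :: "('g, 'b) monoid_scheme \<Rightarrow> ('g \<Rightarrow> 'k::field) set" where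
  "ZIrr G = {f. \<exists>a :: ('g \<Rightarrow> 'k) \<Rightarrow> int.
               f = (\<lambda>x. \<Sum>\<chi>\<in>lin_chars G. of_int (a \<chi>) * \<chi> x)}"

definition char_inner :: "('g, 'b) monoid_scheme \<Rightarrow> ('g \<Rightarrow> 'k::field) \<Rightarrow> ('g \<Rightarrow> 'k) \<Rightarrow> 'k" where
  "char_inner G \<alpha> \<beta> = (\<Sum>g\<in>carrier G. \<alpha> g * \<beta> (inv\<^bsub>G\<^esub> g)) / of_nat (order G)"

definition mu_of :: "('g, 'b) monoid_scheme \<Rightarrow> (('g \<Rightarrow> 'k::field) \<Rightarrow> ('g \<Rightarrow> 'k)) \<Rightarrow> 'g \<Rightarrow> 'g \<Rightarrow> 'k" where
  "mu_of G I g h = (\<Sum>\<chi>\<in>lin_chars G. I \<chi> g * \<chi> (inv\<^bsub>G\<^esub> h))"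

text \<open>Broue's perfectness for a generalized character of G x G (here G = H = P).\<close>
definition perfect :: "nat \<Rightarrow> 'k::field set \<Rightarrow> ('g, 'b) monoid_scheme \<Rightarrow> ('g \<Rightarrow> 'g \<Rightarrow> 'k) \<Rightarrow> bool" where
  "perfect p \<O> G \<mu> \<longleftrightarrow>
     (\<forall>g\<in>carrier G. \<forall>h\<in>carrier G.
        \<mu> g h / of_nat (card (centralizer_grp G g)) \<in> \<O> \<and>
        \<mu> g h / of_nat (card (centralizer_grp G h)) \<in> \<O>) \<and>
     (\<forall>g\<in>carrier G. \<forall>h\<in>carrier G. \<mu> g h \<noteq> 0 \<longrightarrow>
        (p_regular p G g \<longleftrightarrow> p_regular p G h))"

definition perf_isometries :: "nat \<Rightarrow> 'k::field set \<Rightarrow> ('g, 'b) monoid_scheme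
    \<Rightarrow> (('g \<Rightarrow> 'k) \<Rightarrow> ('g \<Rightarrow> 'k)) set" where
  "perf_isometries p \<O> G = {I. I \<in> extensional (ZIrr G) \<and>
      bij_betw I (ZIrr G) (ZIrr G) \<and>
      (\<forall>\<alpha>\<in>ZIrr G. \<forall>\<beta>\<in>ZIrr G. I (\<lambda>x. \<alpha> x + \<beta> x) = (\<lambda>x. I \<alpha> x + I \<beta> x)) \<and>
      (\<forall>\<alpha>\<in>ZIrr G. \<forall>\<beta>\<in>ZIrr G. char_inner G (I \<alpha>) (I \<beta>) = char_inner G \<alpha> \<beta>) \<and>
      perfect p \<O> G (mu_of G I)}"

definition Perf :: "nat \<Rightarrow> 'k::field set \<Rightarrow> ('g, 'b) monoid_scheme
    \<Rightarrow> (('g \<Rightarrow> 'k) \<Rightarrow> ('g \<Rightarrow> 'k)) monoid" where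
  "Perf p \<O> G = \<lparr>carrier = perf_isometries p \<O> G,
                 monoid.mult = (\<lambda>I J. compose (ZIrr G) I J),
                 monoid.one = restrict id (ZIrr G)\<rparr>"

definition grp_alg :: "'k::field set \<Rightarrow> ('g, 'b) monoid_scheme \<Rightarrow> ('g \<Rightarrow> 'k) set" where
  "grp_alg \<O> G = {a. (\<forall>x\<in>carrier G. a x \<in> \<O>) \<and> (\<forall>x. x \<notin> carrier G \<longrightarrow> a x = 0)}"

definition grp_alg_mult :: "('g, 'b) monoid_scheme \<Rightarrow> ('g \<Rightarrow> 'k::field) \<Rightarrow> ('g \<Rightarrow> 'k) \<Rightarrow> ('g \<Rightarrow> 'k)" where
  "grp_alg_mult G a b = (\<lambda>x. if x \<in> carrier G
       then (\<Sum>y\<in>carrier G. a y * b (inv\<^bsub>G\<^esub> y \<otimes>\<^bsub>G\<^esub> x)) else 0)"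

definition grp_alg_one :: "('g, 'b) monoid_scheme \<Rightarrow> ('g \<Rightarrow> 'k::field)" where
  "grp_alg_one G = (\<lambda>x. if x = \<one>\<^bsub>G\<^esub> then 1 else 0)"

definition alg_auts :: "'k::field set \<Rightarrow> ('g, 'b) monoid_scheme \<Rightarrow> (('g \<Rightarrow> 'k) \<Rightarrow> ('g \<Rightarrow> 'k)) set" where
  "alg_auts \<O> G = {\<phi>. \<phi> \<in> extensional (grp_alg \<O> G) \<and>
      bij_betw \<phi> (grp_alg \<O> G) (grp_alg \<O> G) \<and>
      (\<forall>a\<in>grp_alg \<O> G. \<forall>b\<in>grp_alg \<O> G. \<phi> (\<lambda>x. a x + b x) = (\<lambda>x. \<phi> a x + \<phi> b x)) \<and>
      (\<forall>c\<in>\<O>. \<forall>a\<in>grp_alg \<O> G. \<phi> (\<lambda>x. c * a x) = (\<lambda>x. c * \<phi> a x)) \<and>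
      (\<forall>a\<in>grp_alg \<O> G. \<forall>b\<in>grp_alg \<O> G.
          \<phi> (grp_alg_mult G a b) = grp_alg_mult G (\<phi> a) (\<phi> b)) \<and>
      \<phi> (grp_alg_one G) = grp_alg_one G}"

definition Aut_alg :: "'k::field set \<Rightarrow> ('g, 'b) monoid_scheme \<Rightarrow> (('g \<Rightarrow> 'k) \<Rightarrow> ('g \<Rightarrow> 'k)) monoid" where
  "Aut_alg \<O> G = \<lparr>carrier = alg_auts \<O> G,
                  monoid.mult = (\<lambda>\<phi> \<psi>. compose (grp_alg \<O> G) \<phi> \<psi>),
                  monoid.one = restrict id (grp_alg \<O> G)\<rparr>"

definition C2 :: "int monoid" where
  "C2 = \<lparr>carrier = {1, -1}, monoid.mult = (*), monoid.one = 1\<rparr>"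

end

theory Submission
  imports Defs "HOL-Computational_Algebra.Polynomial"
begin
hide_const (open) Polynomial.order

lemma roots_bound:
  fixes n :: nat assumes "n \<ge> 1"
  shows "finite {z::'a::field. z^n = 1} \<and> card {z::'a::field. z^n = 1} \<le> n"
proof -
  define q :: "'a poly" where "q = Polynomial.monom 1 n + [:-1:]"
  have dq: "Polynomial.degree q = n" using assms unfolding q_def
    by (subst degree_add_eq_left) (auto simp: degree_monom_eq)
  have "q \<noteq> 0" using dq assms by auto
  moreover have "{z. z^n = 1} = {x. poly q x = 0}" by (auto simp: q_def poly_monom)
  ultimately show ?thesis using poly_roots_finite[of q] card_poly_roots_bound[of q] dq by simp
qed

lemma prim_root_all:
  fixes \<zeta> :: "'a::field"
  assumes m: "m \<ge> 1" and z1: "\<zeta> ^ m = 1" and z2: "\<forall>k. 0 < k \<longrightarrow> k < m \<longrightarrow> \<zeta> ^ k \<noteq> 1"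
    and c: "c ^ m = 1"
  shows "\<exists>i<m. c = \<zeta> ^ i"
proof -
  have nz: "\<zeta> \<noteq> 0" using z1 m by (cases m) auto
  have inj: "inj_on (\<lambda>i. \<zeta> ^ i) {..<m}"
  proof (rule inj_onI)
    fix i j assume i: "i \<in> {..<m}" and j: "j \<in> {..<m}" and e: "\<zeta> ^ i = \<zeta> ^ j"
    show "i = j"
    proof (rule ccontr)
      assume "i \<noteq> j"
      then consider "i < j" | "j < i" by linarith
      then show False
      proof cases
        case 1
        have "\<zeta> ^ j = \<zeta> ^ i * \<zeta> ^ (j - i)" using 1 by (simp add: power_add[symmetric])
        then have "\<zeta> ^ (j - i) = 1" using e nz by auto
        then show False using z2 1 j by auto
      next
        case 2
        have "\<zeta> ^ i = \<zeta> ^ j * \<zeta> ^ (i - j)" using 2 by (simp add: power_add[symmetric])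
        then have "\<zeta> ^ (i - j) = 1" using e nz by auto
        then show False using z2 2 i by auto
      qed
    qed
  qed
  have sub: "(\<lambda>i. \<zeta> ^ i) ` {..<m} \<subseteq> {z. z ^ m = 1}"
  proof (rule image_subsetI)
    fix i have "(\<zeta> ^ i) ^ m = (\<zeta> ^ m) ^ i" by (metis power_mult mult.commute)
    then show "\<zeta> ^ i \<in> {z. z ^ m = 1}" using z1 by simp
  qed
  have rb: "finite {z::'a. z^m = 1}" "card {z::'a. z^m = 1} \<le> m" using roots_bound m by auto
  have "card ((\<lambda>i. \<zeta> ^ i) ` {..<m}) = m" using card_image[OF inj] by simp
  then have "(\<lambda>i. \<zeta> ^ i) ` {..<m} = {z. z ^ m = 1}"
    using card_subset_eq[OF rb(1) sub] rb(2) card_mono[OF rb(1) sub] by linarith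
  then show ?thesis using c by auto
qed

definition hchar :: "('g, 'b) monoid_scheme \<Rightarrow> 'g set \<Rightarrow> ('g \<Rightarrow> 'k::field) \<Rightarrow> bool" where
  "hchar G H l \<longleftrightarrow> (\<forall>x\<in>H. \<forall>y\<in>H. l (x \<otimes>\<^bsub>G\<^esub> y) = l x * l y) \<and> l \<one>\<^bsub>G\<^esub> = 1"

locale cg = comm_group G for G :: "('g, 'b) monoid_scheme" (structure) +
  fixes p :: nat and N :: nat and \<zeta> :: "'k::field_char_0"
  assumes fin: "finite (carrier G)" and pp: "Factorial_Ring.prime p" and ordG: "order G = p ^ N"
    and z1: "\<zeta> ^ order G = 1" and z2: "\<forall>k. 0 < k \<longrightarrow> k < order G \<longrightarrow> \<zeta> ^ k \<noteq> 1"
begin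

abbreviation Ch where "Ch \<equiv> (lin_chars G :: ('g \<Rightarrow> 'k) set)"
abbreviation n where "n \<equiv> order G"

lemma n_pos: "n > 0" using fin by (simp add: order_gt_0_iff_finite)

lemma sub_pow:
  assumes "subgroup H G" "y \<in> H"
  shows "y [^] (k::nat) \<in> H"
proof (induction k)
  case 0 then show ?case using assms(1) by (simp add: subgroup.one_closed)
next
  case (Suc k)
  then show ?case using assms by (simp add: subgroup.m_closed)
qed

lemma hchar_pow:
  assumes "subgroup H G" "hchar G H l" "y \<in> H"
  shows "l (y [^] (k::nat)) = l y ^ k"
proof (induction k)
  case 0 then show ?case using assms(2) by (simp add: hchar_def)
next
  case (Suc k)
  have "y [^] Suc k = y [^] k \<otimes> y" by simp
  moreover have "y [^] k \<in> H" using assms(1,3) sub_pow by blast 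
  ultimately show ?case using Suc assms(2,3) by (simp add: hchar_def)
qed

lemma step_dvd:
  assumes H: "subgroup H G" and x: "x \<in> carrier G" "x \<notin> H"
    and xp: "x [^] p \<in> H" and xd: "x [^] d \<in> H"
  shows "p dvd (d::nat)"
proof (rule ccontr)
  assume nd: "\<not> p dvd d"
  have p2: "p \<ge> 2" using pp prime_ge_2_nat by blast
  define r where "r = d mod p"
  define q where "q = d div p"
  have r0: "r \<noteq> 0" "r < p" using nd p2 by (auto simp: r_def mod_eq_0_iff_dvd)
  have dd: "d = r + p * q" by (simp add: r_def q_def)
  have "x [^] d = x [^] r \<otimes> (x [^] p) [^] q"
    using x by (simp only: dd nat_pow_mult nat_pow_pow)
  then have "x [^] r = x [^] d \<otimes> inv ((x [^] p) [^] q)"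
    using x by (simp add: m_assoc)
  moreover have "(x [^] p) [^] q \<in> H" using xp H sub_pow by blast
  ultimately have xr: "x [^] r \<in> H" using xd H
    by (metis subgroup.m_closed subgroup.m_inv_closed)
  have "\<not> p dvd r" using r0 by (auto dest: dvd_imp_le)
  then have "coprime p r" using prime_imp_coprime[OF pp] by blast
  then have "gcd r p = 1" by (simp add: coprime_commute)
  then obtain a b where ab: "r * a = p * b + 1" using bezout_nat[of r p] r0 by auto
  have "(x [^] r) [^] a = (x [^] p) [^] b \<otimes> x"
  proof -
    have "(x [^] r) [^] a = x [^] (p * b + 1)" using x by (simp only: nat_pow_pow ab)
    also have "\<dots> = x [^] (p * b) \<otimes> x [^] (1::nat)" using x by (simp only: nat_pow_mult)
    finally show ?thesis using x by (simp add: nat_pow_pow)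
  qed
  then have "x = inv ((x [^] p) [^] b) \<otimes> (x [^] r) [^] a"
    using x by (simp add: m_assoc[symmetric])
  moreover have "(x [^] p) [^] b \<in> H" "(x [^] r) [^] a \<in> H"
    using xp xr H sub_pow by blast+
  ultimately have "x \<in> H" using H by (metis subgroup.m_closed subgroup.m_inv_closed)
  then show False using x by blast
qed

lemma step_ext:
  assumes H: "subgroup H G" and l: "hchar G H l" and x: "x \<in> carrier G" "x \<notin> H"
    and xp: "x [^] p \<in> H" and om: "\<omega> ^ p = l (x [^] p)"
  shows "\<exists>H' l'. subgroup H' G \<and> H \<subseteq> H' \<and> x \<in> H' \<and> hchar G H' l' \<and> (\<forall>h\<in>H. l' h = l h) \<and> l' x = \<omega>"
proof -
  have Hc: "H \<subseteq> carrier G" using H subgroup.subset by blast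
  have wd1: "l h * \<omega> ^ i = l h' * \<omega> ^ j"
    if h: "h \<in> H" "h' \<in> H" and e: "h \<otimes> x [^] (i::nat) = h' \<otimes> x [^] (j::nat)" and ij: "j \<le> i" for h h' i j
  proof -
    define d where "d = i - j"
    have hc: "h \<in> carrier G" "h' \<in> carrier G" using h Hc by auto
    have idj: "i = d + j" using ij by (simp add: d_def)
    have "h \<otimes> x [^] i = (h \<otimes> x [^] d) \<otimes> x [^] j"
      using x hc by (simp only: idj nat_pow_mult[symmetric] m_assoc nat_pow_closed)
    then have "h \<otimes> x [^] d = h'" using e x hc by (metis m_closed nat_pow_closed right_cancel)
    then have xd: "x [^] d = inv h \<otimes> h'" using hc x by (metis inv_solve_left' nat_pow_closed)
    then have xdH: "x [^] d \<in> H" using h H by (metis subgroup.m_closed subgroup.m_inv_closed)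
    then obtain q where dq: "d = p * q" using step_dvd[OF H x xp] by blast
    have "l (x [^] d) = l ((x [^] p) [^] q)" using x by (simp only: dq nat_pow_pow)
    also have "\<dots> = l (x [^] p) ^ q" using hchar_pow[OF H l xp] by blast
    also have "\<dots> = \<omega> ^ d" using om dq by (simp add: power_mult)
    finally have lxd: "l (x [^] d) = \<omega> ^ d" .
    have "l h' = l h * l (x [^] d)" using l h xdH \<open>h \<otimes> x [^] d = h'\<close>
      unfolding hchar_def by metis
    then show ?thesis using lxd by (simp add: idj power_add mult.assoc)
  qed
  have wd: "l h * \<omega> ^ i = l h' * \<omega> ^ j"
    if h: "h \<in> H" "h' \<in> H" and e: "h \<otimes> x [^] (i::nat) = h' \<otimes> x [^] (j::nat)" for h h' i j
  proof (cases "j \<le> i")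
    case True then show ?thesis using wd1[OF h e] by blast
  next
    case False then show ?thesis using wd1[OF h(2,1) e[symmetric]] by simp
  qed
  define H' where "H' = {h \<otimes> x [^] (i::nat) | h i. h \<in> H}"
  define l' where "l' = (\<lambda>y. SOME v. \<exists>h\<in>H. \<exists>i. y = h \<otimes> x [^] (i::nat) \<and> v = l h * \<omega> ^ i)"
  have l'eq: "l' (h \<otimes> x [^] (i::nat)) = l h * \<omega> ^ i" if "h \<in> H" for h i
  proof -
    have "\<exists>v. \<exists>h2\<in>H. \<exists>i2. h \<otimes> x [^] i = h2 \<otimes> x [^] (i2::nat) \<and> v = l h2 * \<omega> ^ i2"
      using that by blast
    then have "\<exists>h2\<in>H. \<exists>i2. h \<otimes> x [^] i = h2 \<otimes> x [^] (i2::nat) \<and> l' (h \<otimes> x [^] i) = l h2 * \<omega> ^ i2"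
      unfolding l'_def by (rule someI_ex)
    then obtain h2 i2 where "h2 \<in> H" "h \<otimes> x [^] i = h2 \<otimes> x [^] (i2::nat)" "l' (h \<otimes> x [^] i) = l h2 * \<omega> ^ i2"
      by blast
    then show ?thesis using wd[OF that] by metis
  qed
  have H'c: "H' \<subseteq> carrier G" using Hc x unfolding H'_def by (auto intro!: m_closed nat_pow_closed)
  have HH': "H \<subseteq> H'"
  proof
    fix h assume "h \<in> H"
    then have "h = h \<otimes> x [^] (0::nat)" using Hc by auto
    then show "h \<in> H'" using \<open>h \<in> H\<close> unfolding H'_def by blast
  qed
  have xH': "x \<in> H'"
  proof -
    have "x = \<one> \<otimes> x [^] (1::nat)" using x by simp
    then show ?thesis using H subgroup.one_closed unfolding H'_def by blast
  qed
  have mulH: "(h \<otimes> x [^] (i::nat)) \<otimes> (h' \<otimes> x [^] (j::nat)) = (h \<otimes> h') \<otimes> x [^] (i + j)"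
    if "h \<in> H" "h' \<in> H" for h h' i j
  proof -
    have hc: "h \<in> carrier G" "h' \<in> carrier G" using that Hc by auto
    have "(h \<otimes> x [^] i) \<otimes> (h' \<otimes> x [^] j) = h \<otimes> (x [^] i \<otimes> h') \<otimes> x [^] j"
      using hc x by (simp add: m_assoc)
    also have "x [^] i \<otimes> h' = h' \<otimes> x [^] i" using hc x by (simp add: m_comm)
    also have "h \<otimes> (h' \<otimes> x [^] i) \<otimes> x [^] j = (h \<otimes> h') \<otimes> (x [^] i \<otimes> x [^] j)"
      using hc x by (simp add: m_assoc)
    finally show ?thesis using x by (simp add: nat_pow_mult)
  qed
  have sg: "subgroup H' G"
  proof (rule subgroupI)
    show "H' \<subseteq> carrier G" by fact
    show "H' \<noteq> {}" using xH' by auto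
  next
    fix a assume "a \<in> H'"
    then obtain h i where a: "a = h \<otimes> x [^] (i::nat)" "h \<in> H" unfolding H'_def by auto
    have hc: "h \<in> carrier G" using a Hc by auto
    have ih: "inv h \<in> H" using a H by (simp add: subgroup.m_inv_closed)
    have "(inv h \<otimes> x [^] (i * (n - 1))) \<otimes> a = (inv h \<otimes> h) \<otimes> x [^] (i * (n - 1) + i)"
      using mulH[OF ih a(2)] a(1) by simp
    also have "i * (n - 1) + i = n * i" using n_pos by (cases n) (auto simp: algebra_simps)
    also have "x [^] (n * i) = \<one>" using x by (simp add: nat_pow_pow[symmetric] pow_order_eq_1)
    finally have "(inv h \<otimes> x [^] (i * (n - 1))) \<otimes> a = \<one>" using hc by simp
    then have "inv a = inv h \<otimes> x [^] (i * (n - 1))"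
      using a hc x by (intro inv_equality) auto
    then show "inv a \<in> H'" using ih unfolding H'_def by blast
  next
    fix a b assume "a \<in> H'" "b \<in> H'"
    then obtain h i h' j where a: "a = h \<otimes> x [^] (i::nat)" "h \<in> H" and b: "b = h' \<otimes> x [^] (j::nat)" "h' \<in> H"
      unfolding H'_def by auto
    have "a \<otimes> b = (h \<otimes> h') \<otimes> x [^] (i + j)" using a b mulH by simp
    moreover have "h \<otimes> h' \<in> H" using a b H by (simp add: subgroup.m_closed)
    ultimately show "a \<otimes> b \<in> H'" unfolding H'_def by blast
  qed
  have hc': "hchar G H' l'"
    unfolding hchar_def
  proof (intro conjI ballI)
    fix a b assume "a \<in> H'" "b \<in> H'"
    then obtain h i h' j where a: "a = h \<otimes> x [^] (i::nat)" "h \<in> H" and b: "b = h' \<otimes> x [^] (j::nat)" "h' \<in> H"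
      unfolding H'_def by auto
    have "l (h \<otimes> h') = l h * l h'" using l a b by (simp add: hchar_def)
    moreover have "h \<otimes> h' \<in> H" using a b H by (simp add: subgroup.m_closed)
    ultimately show "l' (a \<otimes> b) = l' a * l' b" using a b mulH l'eq
      by (simp add: power_add mult_ac)
  next
    have "l' (\<one> \<otimes> x [^] (0::nat)) = l \<one> * \<omega> ^ 0" using l'eq[of \<one> 0] H by (simp add: subgroup.one_closed)
    then show "l' \<one> = 1" using l by (simp add: hchar_def)
  qed
  have ext: "\<forall>h\<in>H. l' h = l h"
  proof
    fix h assume h: "h \<in> H"
    have "l' (h \<otimes> x [^] (0::nat)) = l h * \<omega> ^ 0" using l'eq[OF h] by blast
    then show "l' h = l h" using h Hc by auto
  qed
  have "l' (\<one> \<otimes> x [^] (1::nat)) = l \<one> * \<omega> ^ 1" using l'eq[of \<one> 1] H by (simp add: subgroup.one_closed)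
  then have "l' x = \<omega>" using l x by (simp add: hchar_def)
  then show ?thesis using sg HH' xH' hc' ext by (intro exI[of _ H'] exI[of _ l']) simp
qed

lemma N_pos_if: assumes "g \<in> carrier G" "g \<noteq> \<one>" shows "N \<ge> 1"
proof (rule ccontr)
  assume "\<not> N \<ge> 1"
  then have "N = 0" by simp
  then have "order G = 1" using ordG by simp
  then have "card (carrier G) = 1" by (simp add: Coset.order_def)
  then obtain a where "carrier G = {a}" using card_1_singletonE by blast
  then show False using assms one_closed by (metis singletonD)
qed

lemma p_dvd_n: assumes "N \<ge> 1" shows "p dvd n" "n div p \<ge> 1" "n div p < n"
proof -
  show pd: "p dvd n" using assms ordG by (simp add: dvd_power)
  have p2: "p \<ge> 2" using pp prime_ge_2_nat by blast
  then show "n div p \<ge> 1" using pd n_pos by (metis One_nat_def dvd_div_eq_0_iff leI less_one not_gr0 prime_gt_0_nat pp) 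
  show "n div p < n" using p2 n_pos by simp
qed

lemma zeta_p_prim:
  assumes "N \<ge> 1"
  shows "(\<zeta> ^ p) ^ (n div p) = 1" "\<forall>k. 0 < k \<longrightarrow> k < n div p \<longrightarrow> (\<zeta> ^ p) ^ k \<noteq> 1"
proof -
  show "(\<zeta> ^ p) ^ (n div p) = 1" using p_dvd_n[OF assms] z1 by (simp add: power_mult[symmetric])
  show "\<forall>k. 0 < k \<longrightarrow> k < n div p \<longrightarrow> (\<zeta> ^ p) ^ k \<noteq> 1"
  proof (intro allI impI)
    fix k assume k: "0 < k" "k < n div p"
    have p0: "p > 0" using pp prime_gt_0_nat by blast
    have "p * k < p * (n div p)" using k p0 by simp
    also have "\<dots> = n" using p_dvd_n[OF assms] by simp
    finally have "p * k < n" .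
    moreover have "p * k > 0" using k p0 by simp
    ultimately show "(\<zeta> ^ p) ^ k \<noteq> 1" using z2 by (simp add: power_mult[symmetric])
  qed
qed

lemma full_ext:
  fixes l :: "'g \<Rightarrow> 'k"
  assumes "subgroup H G" "hchar G H l"
  shows "\<exists>\<chi>. hchar G (carrier G) \<chi> \<and> (\<forall>h\<in>H. \<chi> h = l h)"
  using assms
proof (induction "card (carrier G) - card H" arbitrary: H l rule: less_induct)
  case less
  show ?case
  proof (cases "H = carrier G")
    case True then show ?thesis using less.prems by blast
  next
    case False
    have Hc: "H \<subseteq> carrier G" using less.prems(1) subgroup.subset by blast
    then obtain y where y: "y \<in> carrier G" "y \<notin> H" using False by blast
    have yN: "y [^] (p ^ N) \<in> H" using y ordG pow_order_eq_1[OF y(1)] less.prems(1)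
      by (simp add: subgroup.one_closed)
    define k where "k = (LEAST k. y [^] (p ^ k) \<in> H)"
    have yk: "y [^] (p ^ k) \<in> H" unfolding k_def by (rule LeastI[of _ N]) (rule yN)
    have k0: "k \<noteq> 0"
    proof
      assume "k = 0"
      then have "y [^] (1::nat) \<in> H" using yk by simp
      then show False using y by simp
    qed
    define x where "x = y [^] (p ^ (k - 1))"
    have xc: "x \<in> carrier G" using y by (simp add: x_def)
    have xH: "x \<notin> H"
    proof
      assume "x \<in> H"
      then have "k \<le> k - 1" unfolding x_def k_def by (rule Least_le)
      then show False using k0 by (simp add: k_def)
    qed
    have xp: "x [^] p \<in> H"
    proof -
      have "x [^] p = y [^] (p ^ (k - 1) * p)" using y by (simp add: x_def nat_pow_pow)
      also have "p ^ (k - 1) * p = p ^ k" using k0 by (cases k) (auto simp: mult.commute)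
      finally show ?thesis using yk by simp
    qed
    have N1: "N \<ge> 1" using y less.prems(1) N_pos_if[OF y(1)] subgroup.one_closed by metis
    define c where "c = l (x [^] p)"
    have "c ^ (n div p) = l ((x [^] p) [^] (n div p))"
      unfolding c_def using hchar_pow[OF less.prems(1,2) xp] by simp
    also have "(x [^] p) [^] (n div p) = x [^] n" using xc p_dvd_n[OF N1] by (simp add: nat_pow_pow)
    also have "\<dots> = \<one>" using xc by (simp add: pow_order_eq_1)
    finally have c1: "c ^ (n div p) = 1" using less.prems(2) by (simp add: hchar_def)
    obtain i where "c = (\<zeta> ^ p) ^ i" using prim_root_all[OF p_dvd_n(2)[OF N1] zeta_p_prim[OF N1] c1] by blast
    then have om: "(\<zeta> ^ i) ^ p = l (x [^] p)" by (simp add: c_def power_mult[symmetric] mult.commute)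
    obtain H' l' where H': "subgroup H' G" "H \<subseteq> H'" "x \<in> H'" "hchar G H' l'" "\<forall>h\<in>H. l' h = l h"
      using step_ext[OF less.prems(1,2) xc xH xp om] by blast
    have H'c: "H' \<subseteq> carrier G" using H'(1) subgroup.subset by blast
    have "H \<subset> H'" using H'(2,3) xH by blast
    then have "card H < card H'" using finite_subset[OF H'c fin] by (simp add: psubset_card_mono)
    moreover have "card H' \<le> card (carrier G)" using H'c fin card_mono by blast
    ultimately have "card (carrier G) - card H' < card (carrier G) - card H" by linarith
    then obtain \<chi> where \<chi>: "hchar G (carrier G) \<chi>" "\<forall>h\<in>H'. \<chi> h = l' h"
      using less.hyps H'(1,4) by blast
    have "\<forall>h\<in>H. \<chi> h = l h"
    proof
      fix h assume h: "h \<in> H"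
      then have "h \<in> H'" using H'(2) by blast
      then show "\<chi> h = l h" using \<chi>(2) H'(5) h by simp
    qed
    then show ?thesis using \<chi>(1) by blast
  qed
qed

lemma hchar_to_lin:
  assumes "hchar G (carrier G) \<chi>"
  shows "(\<lambda>x. if x \<in> carrier G then \<chi> x else 0) \<in> Ch"
  using assms unfolding lin_chars_def hchar_def by auto

lemma separation:
  assumes g: "g \<in> carrier G" "g \<noteq> \<one>"
  shows "\<exists>\<chi>\<in>Ch. \<chi> g \<noteq> 1"
proof -
  have N1: "N \<ge> 1" using N_pos_if[OF g] .
  have gN: "g [^] (p ^ N) = \<one>" using g ordG pow_order_eq_1[OF g(1)] by simp
  define k where "k = (LEAST k. g [^] (p ^ k) = \<one>)"
  have gk: "g [^] (p ^ k) = \<one>" unfolding k_def by (rule LeastI[of _ N]) (rule gN)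
  have k0: "k \<noteq> 0"
  proof
    assume "k = 0"
    then have "g [^] (1::nat) = \<one>" using gk by simp
    then show False using g by simp
  qed
  define y where "y = g [^] (p ^ (k - 1))"
  have yc: "y \<in> carrier G" using g by (simp add: y_def)
  have y1: "y \<noteq> \<one>"
  proof
    assume "y = \<one>"
    then have "k \<le> k - 1" unfolding y_def k_def by (rule Least_le)
    then show False using k0 by (simp add: k_def)
  qed
  have yp: "y [^] p = \<one>"
  proof -
    have "y [^] p = g [^] (p ^ (k - 1) * p)" using g by (simp add: y_def nat_pow_pow)
    also have "p ^ (k - 1) * p = p ^ k" using k0 by (cases k) (auto simp: mult.commute)
    finally show ?thesis using gk by simp
  qed
  define \<omega> where "\<omega> = \<zeta> ^ (n div p)"
  have om1: "\<omega> \<noteq> 1" using z2 p_dvd_n[OF N1] by (simp add: \<omega>_def)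
  have omp: "\<omega> ^ p = 1" using z1 p_dvd_n[OF N1] by (simp add: \<omega>_def power_mult[symmetric] mult.commute)
  have hc1: "hchar G {\<one>} (\<lambda>_. 1)" by (simp add: hchar_def)
  obtain H' l' where H': "subgroup H' G" "hchar G H' l'" "l' y = \<omega>" "y \<in> H'"
    using step_ext[OF triv_subgroup hc1 yc _ _, of \<omega>] y1 yp omp by auto
  obtain \<chi> where \<chi>: "hchar G (carrier G) \<chi>" "\<forall>h\<in>H'. \<chi> h = l' h" using full_ext[OF H'(1,2)] by blast
  have "\<chi> y = \<omega>" using \<chi> H' by auto
  moreover have "\<chi> y = \<chi> g ^ (p ^ (k - 1))"
    unfolding y_def using hchar_pow[OF subgroup_self \<chi>(1) g(1)] .
  ultimately have "\<chi> g \<noteq> 1" using om1 by auto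
  then show ?thesis using hchar_to_lin[OF \<chi>(1)] g by (intro bexI[of _ "(\<lambda>x. if x \<in> carrier G then \<chi> x else 0)"]) auto
qed

end

context cg
begin

lemma ch_mult: "\<chi> \<in> Ch \<Longrightarrow> x \<in> carrier G \<Longrightarrow> y \<in> carrier G \<Longrightarrow> \<chi> (x \<otimes> y) = \<chi> x * \<chi> y"
  unfolding lin_chars_def by blast
lemma ch_one: "\<chi> \<in> Ch \<Longrightarrow> \<chi> \<one> = 1"
  unfolding lin_chars_def by blast
lemma ch_out: "\<chi> \<in> Ch \<Longrightarrow> x \<notin> carrier G \<Longrightarrow> \<chi> x = 0"
  unfolding lin_chars_def by blast
lemma ch_inv: "\<chi> \<in> Ch \<Longrightarrow> g \<in> carrier G \<Longrightarrow> \<chi> (inv g) * \<chi> g = 1"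
  using ch_mult[of \<chi> "inv g" g] ch_one[of \<chi>] by simp
lemma ch_inv2: "\<chi> \<in> Ch \<Longrightarrow> g \<in> carrier G \<Longrightarrow> \<chi> g * \<chi> (inv g) = 1"
  using ch_inv by (simp add: mult.commute)
lemma ch_nz: "\<chi> \<in> Ch \<Longrightarrow> g \<in> carrier G \<Longrightarrow> \<chi> g \<noteq> 0"
  using ch_inv by fastforce
lemma ch_pow: "\<chi> \<in> Ch \<Longrightarrow> g \<in> carrier G \<Longrightarrow> \<chi> (g [^] (k::nat)) = \<chi> g ^ k"
  by (induction k) (auto simp: ch_one ch_mult)
lemma ch_root: "\<chi> \<in> Ch \<Longrightarrow> g \<in> carrier G \<Longrightarrow> \<chi> g ^ n = 1"
  using ch_pow[of \<chi> g n] by (simp add: pow_order_eq_1 ch_one)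

lemma fin_Ch: "finite Ch"
proof -
  define R where "R = {z::'k. z ^ n = 1}"
  have "n \<ge> 1" using n_pos by simp
  then have fR: "finite R" unfolding R_def using roots_bound[of n] by blast
  have "Ch \<subseteq> (\<lambda>f x. if x \<in> carrier G then f x else 0) ` (carrier G \<rightarrow>\<^sub>E R)"
  proof
    fix \<chi> assume c: "\<chi> \<in> Ch"
    have "\<chi> = (\<lambda>x. if x \<in> carrier G then restrict \<chi> (carrier G) x else 0)"
      using ch_out[OF c] by auto
    moreover have "restrict \<chi> (carrier G) \<in> carrier G \<rightarrow>\<^sub>E R" using ch_root[OF c] by (auto simp: R_def)
    ultimately show "\<chi> \<in> (\<lambda>f x. if x \<in> carrier G then f x else 0) ` (carrier G \<rightarrow>\<^sub>E R)" by blast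
  qed
  then show ?thesis using finite_PiE[OF fin, of "\<lambda>_. R"] fR by (meson finite_imageI finite_subset)
qed

lemma mult_bij: "h \<in> carrier G \<Longrightarrow> bij_betw (\<lambda>g. h \<otimes> g) (carrier G) (carrier G)"
proof (rule bij_betwI[where g = "\<lambda>g. inv h \<otimes> g"])
  assume h: "h \<in> carrier G"
  show "(\<lambda>g. h \<otimes> g) \<in> carrier G \<rightarrow> carrier G" using h by auto
  show "(\<lambda>g. inv h \<otimes> g) \<in> carrier G \<rightarrow> carrier G" using h by auto
  show "inv h \<otimes> (h \<otimes> x) = x" if "x \<in> carrier G" for x using h that by (simp add: m_assoc[symmetric])
  show "h \<otimes> (inv h \<otimes> y) = y" if "y \<in> carrier G" for y using h that by (simp add: m_assoc[symmetric])
qed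

lemma orth_row:
  assumes c: "\<chi> \<in> Ch" and d: "\<psi> \<in> Ch"
  shows "(\<Sum>g\<in>carrier G. \<chi> g * \<psi> (inv g)) = (if \<chi> = \<psi> then of_nat n else 0)"
proof (cases "\<chi> = \<psi>")
  case True
  then have "(\<Sum>g\<in>carrier G. \<chi> g * \<psi> (inv g)) = (\<Sum>g\<in>carrier G. 1)"
    using ch_inv2[OF c] by simp
  then show ?thesis using True by (simp add: Coset.order_def)
next
  case False
  obtain h where h: "h \<in> carrier G" "\<chi> h \<noteq> \<psi> h"
    using False ch_out[OF c] ch_out[OF d] by (metis ext)
  define \<theta> where "\<theta> g = \<chi> g * \<psi> (inv g)" for g
  have th1: "\<theta> h \<noteq> 1"
  proof
    assume "\<theta> h = 1"
    then have "\<chi> h * \<psi> (inv h) * \<psi> h = \<psi> h" by (simp add: \<theta>_def)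
    then show False using h ch_inv[OF d h(1)] by (simp add: mult.assoc)
  qed
  have thmul: "\<theta> (h \<otimes> g) = \<theta> h * \<theta> g" if g: "g \<in> carrier G" for g
    using h g by (simp add: \<theta>_def inv_mult ch_mult[OF c] ch_mult[OF d] mult_ac)
  define S where "S = (\<Sum>g\<in>carrier G. \<theta> g)"
  have "S = (\<Sum>g\<in>carrier G. \<theta> (h \<otimes> g))"
    unfolding S_def using sum.reindex_bij_betw[OF mult_bij[OF h(1)], of \<theta>] by simp
  also have "\<dots> = \<theta> h * S" unfolding S_def by (simp add: thmul sum_distrib_left)
  finally have "S * (\<theta> h - 1) = 0" by (simp add: algebra_simps)
  then have "S = 0" using th1 by simp
  then show ?thesis using False by (simp add: S_def \<theta>_def)
qed

definition triv :: "'g \<Rightarrow> 'k" where "triv = (\<lambda>x. if x \<in> carrier G then 1 else 0)"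

lemma triv_Ch: "triv \<in> Ch"
  unfolding lin_chars_def triv_def by auto

lemma col_sum:
  assumes g: "g \<in> carrier G"
  shows "(\<Sum>\<chi>\<in>Ch. \<chi> g) = (if g = \<one> then of_nat (card Ch) else 0)"
proof (cases "g = \<one>")
  case True then show ?thesis by (simp add: ch_one)
next
  case False
  obtain l where l: "l \<in> Ch" "l g \<noteq> 1" using separation[OF g False] by blast
  define l' where "l' = (\<lambda>x. if x \<in> carrier G then l (inv x) else 0)"
  have l'c: "l' \<in> Ch" unfolding lin_chars_def l'_def
    using ch_mult[OF l(1)] ch_one[OF l(1)] by (auto simp: inv_mult)
  have cl: "(\<lambda>x. a x * b x) \<in> Ch" if "a \<in> Ch" "b \<in> Ch" for a b
    using that unfolding lin_chars_def by (auto simp: mult_ac)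
  have inv1: "(\<lambda>x. l' x * (l x * \<chi> x)) = \<chi>" if "\<chi> \<in> Ch" for \<chi>
  proof
    fix x show "l' x * (l x * \<chi> x) = \<chi> x"
      using ch_inv[OF l(1), of x] ch_out[OF that, of x] by (cases "x \<in> carrier G") (auto simp: l'_def mult.assoc[symmetric])
  qed
  have inv2: "(\<lambda>x. l x * (l' x * \<chi> x)) = \<chi>" if "\<chi> \<in> Ch" for \<chi>
  proof
    fix x show "l x * (l' x * \<chi> x) = \<chi> x"
      using ch_inv2[OF l(1), of x] ch_out[OF that, of x] by (cases "x \<in> carrier G") (auto simp: l'_def mult.assoc[symmetric])
  qed
  have "(\<Sum>\<chi>\<in>Ch. \<chi> g) = (\<Sum>\<chi>\<in>Ch. l g * \<chi> g)"
  proof (rule sum.reindex_bij_witness[where j = "\<lambda>\<chi> x. l' x * \<chi> x" and i = "\<lambda>\<chi> x. l x * \<chi> x"])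
    show "\<And>a. a \<in> Ch \<Longrightarrow> (\<lambda>x. l x * (l' x * a x)) = a" using inv2 by blast
    show "\<And>a. a \<in> Ch \<Longrightarrow> (\<lambda>x. l' x * a x) \<in> Ch" using cl l'c by blast
    show "\<And>b. b \<in> Ch \<Longrightarrow> (\<lambda>x. l' x * (l x * b x)) = b" using inv1 by blast
    show "\<And>b. b \<in> Ch \<Longrightarrow> (\<lambda>x. l x * b x) \<in> Ch" using cl l by blast
    show "\<And>a. a \<in> Ch \<Longrightarrow> l g * (l' g * a g) = a g"
      using ch_inv2[OF l(1) g] g by (simp add: l'_def mult.assoc[symmetric])
  qed
  also have "\<dots> = l g * (\<Sum>\<chi>\<in>Ch. \<chi> g)" by (simp add: sum_distrib_left)
  finally have "(\<Sum>\<chi>\<in>Ch. \<chi> g) * (l g - 1) = 0" by (simp add: algebra_simps)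
  then show ?thesis using l(2) False by simp
qed

lemma card_Ch: "card Ch = n"
proof -
  have "(\<Sum>g\<in>carrier G. \<Sum>\<chi>\<in>Ch. \<chi> g) = (\<Sum>g\<in>carrier G. if g = \<one> then of_nat (card Ch) else (0::'k))"
    using col_sum by simp
  also have "\<dots> = of_nat (card Ch)" using fin by (simp add: sum.delta)
  finally have A: "(\<Sum>g\<in>carrier G. \<Sum>\<chi>\<in>Ch. \<chi> g) = (of_nat (card Ch) :: 'k)" .
  have "(\<Sum>\<chi>\<in>Ch. \<Sum>g\<in>carrier G. \<chi> g) = (\<Sum>\<chi>\<in>Ch. \<Sum>g\<in>carrier G. \<chi> g * triv (inv g))"
    by (simp add: triv_def)
  also have "\<dots> = (\<Sum>\<chi>\<in>Ch. if \<chi> = triv then of_nat n else 0)"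
    using orth_row triv_Ch by simp
  also have "\<dots> = of_nat n" using fin_Ch triv_Ch by (simp add: sum.delta)
  finally have B: "(\<Sum>\<chi>\<in>Ch. \<Sum>g\<in>carrier G. \<chi> g) = (of_nat n :: 'k)" .
  have "(\<Sum>g\<in>carrier G. \<Sum>\<chi>\<in>Ch. \<chi> g) = (\<Sum>\<chi>\<in>Ch. \<Sum>g\<in>carrier G. \<chi> g)" by (rule sum.swap)
  then have "(of_nat (card Ch) :: 'k) = of_nat n" using A B by simp
  then show ?thesis using of_nat_eq_iff by blast
qed

lemma col_orth:
  assumes g: "g \<in> carrier G" and h: "h \<in> carrier G"
  shows "(\<Sum>\<chi>\<in>Ch. \<chi> g * \<chi> (inv h)) = (if g = h then of_nat n else 0)"
proof -
  have "(\<Sum>\<chi>\<in>Ch. \<chi> g * \<chi> (inv h)) = (\<Sum>\<chi>\<in>Ch. \<chi> (g \<otimes> inv h))"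
    using g h by (simp add: ch_mult)
  also have "\<dots> = (if g \<otimes> inv h = \<one> then of_nat (card Ch) else 0)" using g h col_sum by simp
  also have "(g \<otimes> inv h = \<one>) = (g = h)" using g h inv_equality[of g "inv h"] by auto
  finally show ?thesis by (simp add: card_Ch)
qed


end

context cg
begin

definition fh :: "('g \<Rightarrow> 'k) \<Rightarrow> ('g \<Rightarrow> 'k) \<Rightarrow> 'k" where
  "fh f a = (\<Sum>x\<in>carrier G. a x * f x)"
definition dl :: "'g \<Rightarrow> 'g \<Rightarrow> 'k" where
  "dl g = (\<lambda>x. if x = g then 1 else 0)"
definition supp0 :: "('g \<Rightarrow> 'k) \<Rightarrow> bool" where
  "supp0 a \<longleftrightarrow> (\<forall>x. x \<notin> carrier G \<longrightarrow> a x = 0)"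

lemma dl_one: "grp_alg_one G = dl \<one>"
  by (simp add: grp_alg_one_def dl_def)

lemma fh_dl: "g \<in> carrier G \<Longrightarrow> fh f (dl g) = f g"
proof -
  assume g: "g \<in> carrier G"
  have "fh f (dl g) = (\<Sum>x\<in>carrier G. if x = g then f x else 0)"
    unfolding fh_def dl_def by (intro sum.cong) auto
  then show ?thesis using g fin by simp
qed

lemma fh_add: "fh f (\<lambda>x. a x + b x) = fh f a + fh f b"
  by (simp add: fh_def algebra_simps sum.distrib)
lemma fh_smult: "fh f (\<lambda>x. c * a x) = c * fh f a"
  by (simp add: fh_def algebra_simps sum_distrib_left)
lemma fh_sum_left: "fh (\<lambda>x. \<Sum>\<chi>\<in>S. c \<chi> * F \<chi> x) a = (\<Sum>\<chi>\<in>S. c \<chi> * fh (F \<chi>) a)"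
  unfolding fh_def by (simp add: sum_distrib_left sum_distrib_right mult_ac sum.swap[of _ S])
lemma fh_sum_right: "fh f (\<lambda>x. \<Sum>y\<in>S. c y * F y x) = (\<Sum>y\<in>S. c y * fh f (F y))"
  unfolding fh_def by (simp add: sum_distrib_left sum_distrib_right mult_ac sum.swap[of _ S])

lemma fh_mult:
  assumes c: "\<chi> \<in> Ch"
  shows "fh \<chi> (grp_alg_mult G a b) = fh \<chi> a * fh \<chi> b"
proof -
  have inner: "(\<Sum>x\<in>carrier G. b (inv y \<otimes> x) * \<chi> x) = \<chi> y * fh \<chi> b" if y: "y \<in> carrier G" for y
  proof -
    have "(\<Sum>x\<in>carrier G. b (inv y \<otimes> x) * \<chi> x) = (\<Sum>z\<in>carrier G. b (inv y \<otimes> (y \<otimes> z)) * \<chi> (y \<otimes> z))"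
      using sum.reindex_bij_betw[OF mult_bij[OF y], of "\<lambda>x. b (inv y \<otimes> x) * \<chi> x"] by simp
    also have "\<dots> = (\<Sum>z\<in>carrier G. \<chi> y * (b z * \<chi> z))"
      using y by (intro sum.cong refl) (simp add: m_assoc[symmetric] ch_mult[OF c] mult_ac)
    finally show ?thesis by (simp add: fh_def sum_distrib_left)
  qed
  have "fh \<chi> (grp_alg_mult G a b) = (\<Sum>x\<in>carrier G. (\<Sum>y\<in>carrier G. a y * b (inv y \<otimes> x)) * \<chi> x)"
    by (simp add: fh_def grp_alg_mult_def)
  also have "\<dots> = (\<Sum>x\<in>carrier G. \<Sum>y\<in>carrier G. a y * (b (inv y \<otimes> x) * \<chi> x))"
    by (simp add: sum_distrib_right mult.assoc)
  also have "\<dots> = (\<Sum>y\<in>carrier G. \<Sum>x\<in>carrier G. a y * (b (inv y \<otimes> x) * \<chi> x))"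
    by (rule sum.swap)
  also have "\<dots> = (\<Sum>y\<in>carrier G. a y * (\<Sum>x\<in>carrier G. b (inv y \<otimes> x) * \<chi> x))"
    by (simp add: sum_distrib_left)
  also have "\<dots> = (\<Sum>y\<in>carrier G. a y * \<chi> y * fh \<chi> b)"
    by (intro sum.cong refl) (simp add: inner mult.assoc)
  also have "\<dots> = fh \<chi> a * fh \<chi> b" by (simp add: fh_def sum_distrib_right)
  finally show ?thesis .
qed

lemma fourier_inv:
  assumes a: "supp0 a" and h: "h \<in> carrier G"
  shows "(\<Sum>\<chi>\<in>Ch. fh \<chi> a * \<chi> (inv h)) = of_nat n * a h"
proof -
  have "(\<Sum>\<chi>\<in>Ch. fh \<chi> a * \<chi> (inv h)) = (\<Sum>x\<in>carrier G. a x * (\<Sum>\<chi>\<in>Ch. \<chi> x * \<chi> (inv h)))"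
    unfolding fh_def by (simp add: sum_distrib_right sum_distrib_left mult.assoc sum.swap[of _ Ch])
  also have "\<dots> = (\<Sum>x\<in>carrier G. a x * (if x = h then of_nat n else 0))"
    using h by (intro sum.cong refl) (simp add: col_orth)
  also have "\<dots> = (\<Sum>x\<in>carrier G. if x = h then a x * of_nat n else 0)"
    by (intro sum.cong) auto
  also have "\<dots> = of_nat n * a h" using h fin by (simp add: mult.commute)
  finally show ?thesis .
qed

lemma fh_inj:
  assumes a: "supp0 a" and b: "supp0 b" and e: "\<forall>\<chi>\<in>Ch. fh \<chi> a = fh \<chi> b"
  shows "a = b"
proof
  fix x show "a x = b x"
  proof (cases "x \<in> carrier G")
    case True
    have "of_nat n * a x = (\<Sum>\<chi>\<in>Ch. fh \<chi> a * \<chi> (inv x))" by (rule fourier_inv[OF a True, symmetric])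
    also have "\<dots> = (\<Sum>\<chi>\<in>Ch. fh \<chi> b * \<chi> (inv x))" using e by (intro sum.cong) auto
    also have "\<dots> = of_nat n * b x" by (rule fourier_inv[OF b True])
    finally have "of_nat n * a x = of_nat n * b x" .
    then show ?thesis using n_pos by (metis mult_cancel_left of_nat_eq_0_iff not_gr0)
  next
    case False then show ?thesis using a b by (simp add: supp0_def)
  qed
qed

end

context cg
begin

abbreviation Z where "Z \<equiv> (ZIrr G :: ('g \<Rightarrow> 'k) set)"
definition zc :: "(('g \<Rightarrow> 'k) \<Rightarrow> int) \<Rightarrow> 'g \<Rightarrow> 'k" where
  "zc a = (\<lambda>x. \<Sum>\<chi>\<in>Ch. of_int (a \<chi>) * \<chi> x)"

lemma Z_iff: "f \<in> Z \<longleftrightarrow> (\<exists>a. f = zc a)"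
  by (simp add: ZIrr_def zc_def)

lemma Z_sub:
  assumes "S \<subseteq> Ch"
  shows "(\<lambda>x. \<Sum>\<chi>\<in>S. of_int (a \<chi>) * \<chi> x) \<in> Z"
proof -
  define a' where "a' = (\<lambda>\<chi>. if \<chi> \<in> S then a \<chi> else 0)"
  have "(\<lambda>x. \<Sum>\<chi>\<in>S. of_int (a \<chi>) * \<chi> x) = zc a'"
  proof
    fix x
    have "(\<Sum>\<chi>\<in>Ch. of_int (a' \<chi>) * \<chi> x) = (\<Sum>\<chi>\<in>S. of_int (a' \<chi>) * \<chi> x)"
      using assms fin_Ch by (intro sum.mono_neutral_right) (auto simp: a'_def)
    also have "\<dots> = (\<Sum>\<chi>\<in>S. of_int (a \<chi>) * \<chi> x)" by (intro sum.cong) (auto simp: a'_def)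
    finally show "(\<Sum>\<chi>\<in>S. of_int (a \<chi>) * \<chi> x) = zc a' x" by (simp add: zc_def)
  qed
  then show ?thesis using Z_iff by blast
qed

lemma Ch_Z: assumes "\<chi> \<in> Ch" shows "\<chi> \<in> Z"
proof -
  have "(\<lambda>x. \<Sum>\<psi>\<in>{\<chi>}. of_int 1 * \<psi> x) \<in> Z" using Z_sub[of "{\<chi>}" "\<lambda>_. 1"] assms by simp
  then show ?thesis by simp
qed

lemma Z_add: "f \<in> Z \<Longrightarrow> g \<in> Z \<Longrightarrow> (\<lambda>x. f x + g x) \<in> Z"
proof -
  assume "f \<in> Z" "g \<in> Z"
  then obtain a b where "f = zc a" "g = zc b" using Z_iff by blast
  then have "(\<lambda>x. f x + g x) = zc (\<lambda>\<chi>. a \<chi> + b \<chi>)"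
    by (auto simp: zc_def algebra_simps sum.distrib)
  then show ?thesis using Z_iff by blast
qed

lemma Z_smult: "f \<in> Z \<Longrightarrow> (\<lambda>x. of_int k * f x) \<in> Z"
proof -
  assume "f \<in> Z"
  then obtain a where "f = zc a" using Z_iff by blast
  then have "(\<lambda>x. of_int k * f x) = zc (\<lambda>\<chi>. k * a \<chi>)"
    by (auto simp: zc_def algebra_simps sum_distrib_left)
  then show ?thesis using Z_iff by blast
qed

lemma Z_neg: "f \<in> Z \<Longrightarrow> (\<lambda>x. - f x) \<in> Z"
  using Z_smult[of f "-1"] by simp

lemma Z_zero: "(\<lambda>x. 0) \<in> Z"
  using Z_sub[of "{}"] by simp

lemma Z_supp: "f \<in> Z \<Longrightarrow> supp0 f"
  by (auto simp: Z_iff zc_def supp0_def ch_out)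

lemma zc_perm:
  assumes "bij_betw \<tau> Ch Ch"
  shows "(\<lambda>x. \<Sum>\<chi>\<in>Ch. of_int (a \<chi>) * \<tau> \<chi> x) \<in> Z"
proof -
  define \<sigma> where "\<sigma> = inv_into Ch \<tau>"
  have "(\<lambda>x. \<Sum>\<chi>\<in>Ch. of_int (a \<chi>) * \<tau> \<chi> x) = zc (\<lambda>\<psi>. a (\<sigma> \<psi>))"
  proof
    fix x
    have "(\<Sum>\<chi>\<in>Ch. of_int (a \<chi>) * \<tau> \<chi> x) = (\<Sum>\<chi>\<in>Ch. of_int (a (\<sigma> (\<tau> \<chi>))) * \<tau> \<chi> x)"
      using assms by (intro sum.cong) (auto simp: \<sigma>_def bij_betw_def)
    also have "\<dots> = (\<Sum>\<psi>\<in>Ch. of_int (a (\<sigma> \<psi>)) * \<psi> x)"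
      using sum.reindex_bij_betw[OF assms, of "\<lambda>\<psi>. of_int (a (\<sigma> \<psi>)) * \<psi> x"] by simp
    finally show "(\<Sum>\<chi>\<in>Ch. of_int (a \<chi>) * \<tau> \<chi> x) = zc (\<lambda>\<psi>. a (\<sigma> \<psi>)) x" by (simp add: zc_def)
  qed
  then show ?thesis using Z_iff by blast
qed

lemma inner_perm:
  assumes inj: "inj_on \<tau> Ch" and im: "\<tau> ` Ch \<subseteq> Ch"
  shows "char_inner G (\<lambda>x. \<Sum>\<chi>\<in>Ch. of_int (a \<chi>) * \<tau> \<chi> x) (\<lambda>x. \<Sum>\<chi>\<in>Ch. of_int (b \<chi>) * \<tau> \<chi> x)
       = of_int (\<Sum>\<chi>\<in>Ch. a \<chi> * b \<chi>)"
proof -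
  define T where "T \<chi> \<psi> g = (of_int (a \<chi>) * \<tau> \<chi> g) * (of_int (b \<psi>) * \<tau> \<psi> (inv g))" for \<chi> \<psi> g
  have "(\<Sum>g\<in>carrier G. (\<Sum>\<chi>\<in>Ch. of_int (a \<chi>) * \<tau> \<chi> g) * (\<Sum>\<chi>\<in>Ch. of_int (b \<chi>) * \<tau> \<chi> (inv g)))
      = (\<Sum>g\<in>carrier G. \<Sum>\<chi>\<in>Ch. \<Sum>\<psi>\<in>Ch. T \<chi> \<psi> g)"
    by (simp add: sum_product T_def)
  also have "\<dots> = (\<Sum>\<chi>\<in>Ch. \<Sum>g\<in>carrier G. \<Sum>\<psi>\<in>Ch. T \<chi> \<psi> g)" by (rule sum.swap)
  also have "\<dots> = (\<Sum>\<chi>\<in>Ch. \<Sum>\<psi>\<in>Ch. \<Sum>g\<in>carrier G. T \<chi> \<psi> g)"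
    by (intro sum.cong refl) (rule sum.swap)
  also have "\<dots> = (\<Sum>\<chi>\<in>Ch. \<Sum>\<psi>\<in>Ch. of_int (a \<chi>) * of_int (b \<psi>) * (if \<chi> = \<psi> then of_nat n else 0))"
  proof (intro sum.cong refl)
    fix \<chi> \<psi> assume c: "\<chi> \<in> Ch" and d: "\<psi> \<in> Ch"
    have "(\<Sum>g\<in>carrier G. T \<chi> \<psi> g) = of_int (a \<chi>) * of_int (b \<psi>) * (\<Sum>g\<in>carrier G. \<tau> \<chi> g * \<tau> \<psi> (inv g))"
      by (simp add: T_def sum_distrib_left mult_ac)
    also have "(\<Sum>g\<in>carrier G. \<tau> \<chi> g * \<tau> \<psi> (inv g)) = (if \<tau> \<chi> = \<tau> \<psi> then of_nat n else 0)"
      using orth_row c d im by blast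
    also have "(\<tau> \<chi> = \<tau> \<psi>) = (\<chi> = \<psi>)" using inj c d by (meson inj_on_eq_iff)
    finally show "(\<Sum>g\<in>carrier G. T \<chi> \<psi> g) = of_int (a \<chi>) * of_int (b \<psi>) * (if \<chi> = \<psi> then of_nat n else (0::'k))" .
  qed
  also have "\<dots> = (\<Sum>\<chi>\<in>Ch. of_int (a \<chi>) * of_int (b \<chi>) * of_nat n)"
  proof (intro sum.cong refl)
    fix \<chi> assume c: "\<chi> \<in> Ch"
    have "(\<Sum>\<psi>\<in>Ch. of_int (a \<chi>) * of_int (b \<psi>) * (if \<chi> = \<psi> then of_nat n else 0))
        = (\<Sum>\<psi>\<in>Ch. if \<chi> = \<psi> then of_int (a \<chi>) * of_int (b \<psi>) * of_nat n else (0::'k))"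
      by (intro sum.cong) auto
    also have "\<dots> = of_int (a \<chi>) * of_int (b \<chi>) * of_nat n" using c fin_Ch by simp
    finally show "(\<Sum>\<psi>\<in>Ch. of_int (a \<chi>) * of_int (b \<psi>) * (if \<chi> = \<psi> then of_nat n else 0)) = (of_int (a \<chi>) * of_int (b \<chi>) * of_nat n :: 'k)" .
  qed
  also have "\<dots> = of_int (\<Sum>\<chi>\<in>Ch. a \<chi> * b \<chi>) * of_nat n" by (simp add: sum_distrib_right)
  finally show ?thesis using n_pos by (simp add: char_inner_def)
qed

lemma inner_zc: "char_inner G (zc a) (zc b) = of_int (\<Sum>\<chi>\<in>Ch. a \<chi> * b \<chi>)"
  using inner_perm[of "\<lambda>\<chi>. \<chi>" a b] by (simp add: zc_def)

lemma norm1: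
  assumes f: "f \<in> Z" and n1: "char_inner G f f = 1"
  shows "\<exists>\<psi>\<in>Ch. f = \<psi> \<or> f = (\<lambda>x. - \<psi> x)"
proof -
  obtain a where fa: "f = zc a" using f Z_iff by blast
  have "(of_int (\<Sum>\<chi>\<in>Ch. a \<chi> * a \<chi>) :: 'k) = of_int 1" using n1 inner_zc[of a a] fa by simp
  then have s1: "(\<Sum>\<chi>\<in>Ch. a \<chi> * a \<chi>) = 1" using of_int_eq_iff by blast
  obtain \<psi> where \<psi>: "\<psi> \<in> Ch" "a \<psi> \<noteq> 0"
  proof (rule ccontr)
    assume "\<not> thesis"
    then have "\<forall>\<chi>\<in>Ch. a \<chi> = 0" using that by blast
    then have "(\<Sum>\<chi>\<in>Ch. a \<chi> * a \<chi>) = 0" by simp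
    then show False using s1 by simp
  qed
  have sp: "(\<Sum>\<chi>\<in>Ch. a \<chi> * a \<chi>) = a \<psi> * a \<psi> + (\<Sum>\<chi>\<in>Ch - {\<psi>}. a \<chi> * a \<chi>)"
    using \<psi>(1) fin_Ch by (simp add: sum.remove)
  have nn: "(\<Sum>\<chi>\<in>Ch - {\<psi>}. a \<chi> * a \<chi>) \<ge> 0" by (intro sum_nonneg) simp
  have "a \<psi> * a \<psi> \<ge> 1" using \<psi>(2) by (metis int_one_le_iff_zero_less zero_less_mult_iff linorder_neqE_linordered_idom)
  then have sq: "a \<psi> * a \<psi> = 1" and r0: "(\<Sum>\<chi>\<in>Ch - {\<psi>}. a \<chi> * a \<chi>) = 0" using sp s1 nn by linarith+
  have z: "\<forall>\<chi>\<in>Ch - {\<psi>}. a \<chi> * a \<chi> = 0" using r0 fin_Ch by (subst (asm) sum_nonneg_eq_0_iff) auto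
  have apm: "a \<psi> = 1 \<or> a \<psi> = -1" using sq by (metis zmult_eq_1_iff)
  have "f = (\<lambda>x. of_int (a \<psi>) * \<psi> x)"
  proof
    fix x
    have "f x = of_int (a \<psi>) * \<psi> x + (\<Sum>\<chi>\<in>Ch - {\<psi>}. of_int (a \<chi>) * \<chi> x)"
      using fa \<psi>(1) fin_Ch by (simp add: zc_def sum.remove)
    also have "(\<Sum>\<chi>\<in>Ch - {\<psi>}. of_int (a \<chi>) * \<chi> x) = 0" using z by (intro sum.neutral) simp
    finally show "f x = of_int (a \<psi>) * \<psi> x" by simp
  qed
  then show ?thesis using apm \<psi>(1) by auto
qed

end


locale cgO = cg G p N \<zeta> for G :: "('g, 'b) monoid_scheme" (structure) and p N and \<zeta> :: "'k::field_char_0" +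
  fixes \<O> :: "'k set"
  assumes O0: "0 \<in> \<O>" and O1: "1 \<in> \<O>" and Oadd: "x \<in> \<O> \<Longrightarrow> y \<in> \<O> \<Longrightarrow> x + y \<in> \<O>"
    and Omul: "x \<in> \<O> \<Longrightarrow> y \<in> \<O> \<Longrightarrow> x * y \<in> \<O>" and Oneg: "x \<in> \<O> \<Longrightarrow> - x \<in> \<O>"
begin

abbreviation OA where "OA \<equiv> (grp_alg \<O> G :: ('g \<Rightarrow> 'k) set)"

lemma Osum: "(\<And>i. i \<in> S \<Longrightarrow> f i \<in> \<O>) \<Longrightarrow> sum f S \<in> \<O>"
proof (induction S rule: infinite_finite_induct)
  case (infinite A) then show ?case using O0 by simp
next
  case empty then show ?case using O0 by simp
next
  case (insert x F) then show ?case using Oadd by simp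
qed

lemma reg_iff: assumes g: "g \<in> carrier G" shows "p_regular p G g \<longleftrightarrow> g = \<one>"
proof
  assume "p_regular p G g"
  then have c: "coprime (ord g) p" by (simp add: p_regular_def)
  have "ord g dvd p ^ N" using ord_dvd_group_order[OF g] ordG by simp
  moreover have "coprime (ord g) (p ^ N)" using c by simp
  ultimately have "is_unit (ord g)" using coprime_absorb_left by blast
  then have "ord g = 1" by simp
  then show "g = \<one>" using ord_eq_1[OF g] by simp
next
  assume "g = \<one>" then show "p_regular p G g" by (simp add: p_regular_def)
qed

lemma OA_iff: "a \<in> OA \<longleftrightarrow> (\<forall>x\<in>carrier G. a x \<in> \<O>) \<and> supp0 a"
  by (auto simp: grp_alg_def supp0_def)

lemma OA_supp: "a \<in> OA \<Longrightarrow> supp0 a" by (simp add: OA_iff)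

lemma OA_add: "a \<in> OA \<Longrightarrow> b \<in> OA \<Longrightarrow> (\<lambda>x. a x + b x) \<in> OA"
  by (auto simp: OA_iff supp0_def Oadd)
lemma OA_smult: "c \<in> \<O> \<Longrightarrow> a \<in> OA \<Longrightarrow> (\<lambda>x. c * a x) \<in> OA"
  by (auto simp: OA_iff supp0_def Omul)
lemma OA_zero: "(\<lambda>x. 0) \<in> OA"
  by (auto simp: OA_iff supp0_def O0)
lemma OA_dl: "g \<in> carrier G \<Longrightarrow> dl g \<in> OA"
  by (auto simp: OA_iff supp0_def dl_def O0 O1)
lemma OA_one: "grp_alg_one G \<in> OA"
  using OA_dl[of \<one>] by (simp add: dl_one)
lemma OA_mult: "a \<in> OA \<Longrightarrow> b \<in> OA \<Longrightarrow> grp_alg_mult G a b \<in> OA"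
  by (auto simp: OA_iff supp0_def grp_alg_mult_def intro!: Osum Omul)
lemma OA_sum: "(\<And>i. i \<in> S \<Longrightarrow> F i \<in> OA) \<Longrightarrow> (\<lambda>x. \<Sum>i\<in>S. F i x) \<in> OA"
  by (auto simp: OA_iff supp0_def intro!: Osum)

lemma dl_mult: "x \<in> carrier G \<Longrightarrow> y \<in> carrier G \<Longrightarrow> grp_alg_mult G (dl x) (dl y) = dl (x \<otimes> y)"
proof
  fix z assume x: "x \<in> carrier G" and y: "y \<in> carrier G"
  show "grp_alg_mult G (dl x) (dl y) z = dl (x \<otimes> y) z"
  proof (cases "z \<in> carrier G")
    case True
    have "grp_alg_mult G (dl x) (dl y) z = (\<Sum>w\<in>carrier G. if w = x then dl y (inv w \<otimes> z) else 0)"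
      using True unfolding grp_alg_mult_def by (simp, intro sum.cong) (auto simp: dl_def)
    also have "\<dots> = dl y (inv x \<otimes> z)" using x fin by simp
    moreover have "(inv x \<otimes> z = y) = (z = x \<otimes> y)" using x y True
      by (metis inv_closed inv_solve_left' m_closed)
    ultimately show ?thesis by (simp add: dl_def)
  next
    case False
    then have "z \<noteq> x \<otimes> y" using x y by auto
    then show ?thesis using False by (simp add: grp_alg_mult_def dl_def)
  qed
qed

subsection \<open>Automorphisms from permutations of characters\<close>

definition Bt :: "(('g \<Rightarrow> 'k) \<Rightarrow> ('g \<Rightarrow> 'k)) \<Rightarrow> 'g \<Rightarrow> 'g \<Rightarrow> 'k" where
  "Bt \<tau> g h = (if h \<in> carrier G then (\<Sum>\<chi>\<in>Ch. \<tau> \<chi> g * \<chi> (inv h)) / of_nat n else 0)"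

definition phi :: "(('g \<Rightarrow> 'k) \<Rightarrow> ('g \<Rightarrow> 'k)) \<Rightarrow> ('g \<Rightarrow> 'k) \<Rightarrow> ('g \<Rightarrow> 'k)" where
  "phi \<tau> = restrict (\<lambda>a h. \<Sum>x\<in>carrier G. a x * Bt \<tau> x h) OA"

definition integral :: "(('g \<Rightarrow> 'k) \<Rightarrow> ('g \<Rightarrow> 'k)) \<Rightarrow> bool" where
  "integral \<tau> \<longleftrightarrow> (\<forall>g\<in>carrier G. \<forall>h\<in>carrier G. Bt \<tau> g h \<in> \<O>)"

lemma fh_Bt:
  assumes \<tau>: "bij_betw \<tau> Ch Ch" and c: "\<chi> \<in> Ch" and g: "g \<in> carrier G"
  shows "fh \<chi> (Bt \<tau> g) = \<tau> \<chi> g"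
proof -
  have "fh \<chi> (Bt \<tau> g) = (\<Sum>h\<in>carrier G. ((\<Sum>\<psi>\<in>Ch. \<tau> \<psi> g * \<psi> (inv h)) / of_nat n) * \<chi> h)"
    unfolding fh_def Bt_def by (intro sum.cong refl) simp
  also have "\<dots> = (\<Sum>h\<in>carrier G. \<Sum>\<psi>\<in>Ch. (\<tau> \<psi> g / of_nat n) * (\<chi> h * \<psi> (inv h)))"
    by (intro sum.cong refl) (simp add: sum_divide_distrib sum_distrib_right sum_distrib_left mult_ac)
  also have "\<dots> = (\<Sum>\<psi>\<in>Ch. \<Sum>h\<in>carrier G. (\<tau> \<psi> g / of_nat n) * (\<chi> h * \<psi> (inv h)))" by (rule sum.swap)
  also have "\<dots> = (\<Sum>\<psi>\<in>Ch. (\<tau> \<psi> g / of_nat n) * (if \<chi> = \<psi> then of_nat n else 0))"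
  proof (intro sum.cong refl)
    fix \<psi> assume d: "\<psi> \<in> Ch"
    have "(\<Sum>h\<in>carrier G. (\<tau> \<psi> g / of_nat n) * (\<chi> h * \<psi> (inv h)))
        = (\<tau> \<psi> g / of_nat n) * (\<Sum>h\<in>carrier G. \<chi> h * \<psi> (inv h))"
      by (rule sum_distrib_left[symmetric])
    also have "(\<Sum>h\<in>carrier G. \<chi> h * \<psi> (inv h)) = (if \<chi> = \<psi> then of_nat n else 0)"
      by (rule orth_row[OF c d])
    finally show "(\<Sum>h\<in>carrier G. (\<tau> \<psi> g / of_nat n) * (\<chi> h * \<psi> (inv h)))
        = (\<tau> \<psi> g / of_nat n) * (if \<chi> = \<psi> then of_nat n else 0)" .
  qed
  also have "\<dots> = (\<Sum>\<psi>\<in>Ch. if \<chi> = \<psi> then \<tau> \<psi> g else 0)"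
    using n_pos by (intro sum.cong refl) auto
  also have "\<dots> = \<tau> \<chi> g" using c fin_Ch by simp
  finally show ?thesis .
qed

lemma phi_supp: "supp0 (phi \<tau> a)" if "a \<in> OA"
  using that by (simp add: phi_def supp0_def Bt_def)

lemma fh_phi:
  assumes \<tau>: "bij_betw \<tau> Ch Ch" and c: "\<chi> \<in> Ch" and a: "a \<in> OA"
  shows "fh \<chi> (phi \<tau> a) = fh (\<tau> \<chi>) a"
proof -
  have "fh \<chi> (phi \<tau> a) = fh \<chi> (\<lambda>h. \<Sum>x\<in>carrier G. a x * Bt \<tau> x h)" using a by (simp add: phi_def)
  also have "\<dots> = (\<Sum>x\<in>carrier G. a x * fh \<chi> (Bt \<tau> x))" by (rule fh_sum_right)
  also have "\<dots> = (\<Sum>x\<in>carrier G. a x * \<tau> \<chi> x)" by (intro sum.cong refl) (simp add: fh_Bt[OF \<tau> c])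
  finally show ?thesis by (simp add: fh_def)
qed

lemma phi_OA: assumes I: "integral \<tau>" and a: "a \<in> OA" shows "phi \<tau> a \<in> OA"
  unfolding OA_iff
proof (intro conjI ballI)
  show "supp0 (phi \<tau> a)" using a by (rule phi_supp)
  fix h assume h: "h \<in> carrier G"
  have "phi \<tau> a h = (\<Sum>x\<in>carrier G. a x * Bt \<tau> x h)" using a by (simp add: phi_def)
  also have "\<dots> \<in> \<O>"
  proof (rule Osum)
    fix x assume x: "x \<in> carrier G"
    show "a x * Bt \<tau> x h \<in> \<O>" using a x h I by (intro Omul) (auto simp: OA_iff integral_def)
  qed
  finally show "phi \<tau> a h \<in> \<O>" .
qed

lemma phi_eqI:
  assumes "bij_betw \<tau> Ch Ch" "a \<in> OA" "b \<in> OA" "\<forall>\<chi>\<in>Ch. fh (\<tau> \<chi>) a = fh \<chi> b"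
  shows "phi \<tau> a = b"
  using assms by (intro fh_inj phi_supp OA_supp) (auto simp: fh_phi)

lemma integral_inv:
  assumes \<tau>: "bij_betw \<tau> Ch Ch" and I: "integral \<tau>"
  shows "integral (inv_into Ch \<tau>)"
  unfolding integral_def
proof (intro ballI)
  fix g h assume g: "g \<in> carrier G" and h: "h \<in> carrier G"
  have "(\<Sum>\<chi>\<in>Ch. inv_into Ch \<tau> \<chi> g * \<chi> (inv h)) = (\<Sum>\<psi>\<in>Ch. inv_into Ch \<tau> (\<tau> \<psi>) g * \<tau> \<psi> (inv h))"
    using sum.reindex_bij_betw[OF \<tau>, of "\<lambda>\<chi>. inv_into Ch \<tau> \<chi> g * \<chi> (inv h)"] by simp
  also have "\<dots> = (\<Sum>\<psi>\<in>Ch. \<tau> \<psi> (inv h) * \<psi> (inv (inv g)))"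
    using \<tau> g by (intro sum.cong refl) (auto simp: bij_betw_def mult.commute)
  finally have "Bt (inv_into Ch \<tau>) g h = Bt \<tau> (inv h) (inv g)" using g h by (simp add: Bt_def)
  then show "Bt (inv_into Ch \<tau>) g h \<in> \<O>" using I g h by (simp add: integral_def)
qed

lemma phi_aut:
  assumes \<tau>: "bij_betw \<tau> Ch Ch" and I: "integral \<tau>"
  shows "phi \<tau> \<in> alg_auts \<O> G"
proof -
  define \<sigma> where "\<sigma> = inv_into Ch \<tau>"
  have \<sigma>: "bij_betw \<sigma> Ch Ch" unfolding \<sigma>_def using \<tau> by (simp add: bij_betw_inv_into)
  have I\<sigma>: "integral \<sigma>" unfolding \<sigma>_def using integral_inv[OF \<tau> I] .
  have st: "\<sigma> (\<tau> \<chi>) = \<chi>" if "\<chi> \<in> Ch" for \<chi> using \<tau> that by (simp add: \<sigma>_def bij_betw_def)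
  have ts: "\<tau> (\<sigma> \<chi>) = \<chi>" if "\<chi> \<in> Ch" for \<chi> using \<tau> that by (simp add: \<sigma>_def bij_betw_inv_into_right)
  have tC: "\<tau> \<chi> \<in> Ch" if "\<chi> \<in> Ch" for \<chi> using \<tau> that bij_betwE by blast
  have sC: "\<sigma> \<chi> \<in> Ch" if "\<chi> \<in> Ch" for \<chi> using \<sigma> that bij_betwE by blast
  have c1: "phi \<tau> (phi \<sigma> a) = a" if a: "a \<in> OA" for a
    using \<tau> phi_OA[OF I\<sigma> a] a by (intro phi_eqI) (auto simp: fh_phi[OF \<sigma>] tC st)
  have c2: "phi \<sigma> (phi \<tau> a) = a" if a: "a \<in> OA" for a
    using \<sigma> phi_OA[OF I a] a by (intro phi_eqI) (auto simp: fh_phi[OF \<tau>] sC ts)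
  have bij: "bij_betw (phi \<tau>) OA OA"
    by (rule bij_betw_byWitness[where f' = "phi \<sigma>"]) (use c1 c2 phi_OA I I\<sigma> in auto)
  have add: "phi \<tau> (\<lambda>x. a x + b x) = (\<lambda>x. phi \<tau> a x + phi \<tau> b x)" if "a \<in> OA" "b \<in> OA" for a b
    using that OA_add[OF that] by (auto simp: phi_def algebra_simps sum.distrib)
  have sm: "phi \<tau> (\<lambda>x. c * a x) = (\<lambda>x. c * phi \<tau> a x)" if "c \<in> \<O>" "a \<in> OA" for c a
    using that OA_smult[OF that] by (auto simp: phi_def algebra_simps sum_distrib_left)
  have mul: "phi \<tau> (grp_alg_mult G a b) = grp_alg_mult G (phi \<tau> a) (phi \<tau> b)" if a: "a \<in> OA" and b: "b \<in> OA" for a b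
  proof (rule fh_inj)
    show "supp0 (phi \<tau> (grp_alg_mult G a b))" using OA_mult[OF a b] by (rule phi_supp)
    show "supp0 (grp_alg_mult G (phi \<tau> a) (phi \<tau> b))" by (simp add: supp0_def grp_alg_mult_def)
    show "\<forall>\<chi>\<in>Ch. fh \<chi> (phi \<tau> (grp_alg_mult G a b)) = fh \<chi> (grp_alg_mult G (phi \<tau> a) (phi \<tau> b))"
      using a b OA_mult[OF a b] by (auto simp: fh_phi[OF \<tau>] fh_mult tC)
  qed
  have one: "phi \<tau> (grp_alg_one G) = grp_alg_one G"
    using \<tau> OA_one by (intro phi_eqI) (auto simp: dl_one fh_dl tC ch_one)
  show ?thesis unfolding alg_auts_def
    using bij add sm mul one by (auto simp: phi_def)
qed

lemma aut_OA: "\<phi> \<in> alg_auts \<O> G \<Longrightarrow> a \<in> OA \<Longrightarrow> \<phi> a \<in> OA"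
  unfolding alg_auts_def using bij_betwE by blast

lemma aut_add: "\<phi> \<in> alg_auts \<O> G \<Longrightarrow> a \<in> OA \<Longrightarrow> b \<in> OA \<Longrightarrow> \<phi> (\<lambda>x. a x + b x) = (\<lambda>x. \<phi> a x + \<phi> b x)"
  unfolding alg_auts_def by blast
lemma aut_smult: "\<phi> \<in> alg_auts \<O> G \<Longrightarrow> c \<in> \<O> \<Longrightarrow> a \<in> OA \<Longrightarrow> \<phi> (\<lambda>x. c * a x) = (\<lambda>x. c * \<phi> a x)"
  unfolding alg_auts_def by blast
lemma aut_mult: "\<phi> \<in> alg_auts \<O> G \<Longrightarrow> a \<in> OA \<Longrightarrow> b \<in> OA \<Longrightarrow> \<phi> (grp_alg_mult G a b) = grp_alg_mult G (\<phi> a) (\<phi> b)"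
  unfolding alg_auts_def by blast
lemma aut_one: "\<phi> \<in> alg_auts \<O> G \<Longrightarrow> \<phi> (grp_alg_one G) = grp_alg_one G"
  unfolding alg_auts_def by blast
lemma aut_bij: "\<phi> \<in> alg_auts \<O> G \<Longrightarrow> bij_betw \<phi> OA OA"
  unfolding alg_auts_def by blast
lemma aut_ext: "\<phi> \<in> alg_auts \<O> G \<Longrightarrow> \<phi> \<in> extensional OA"
  unfolding alg_auts_def by blast

lemma aut_zero: assumes "\<phi> \<in> alg_auts \<O> G" shows "\<phi> (\<lambda>x. 0) = (\<lambda>x. 0)"
proof -
  have "\<phi> (\<lambda>x. (\<lambda>x. 0) x + (\<lambda>x. 0) x) = (\<lambda>x. \<phi> (\<lambda>x. 0) x + \<phi> (\<lambda>x. 0) x)"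
    using aut_add[OF assms OA_zero OA_zero] .
  then have "(\<lambda>x. \<phi> (\<lambda>x. 0) x) = (\<lambda>x. \<phi> (\<lambda>x. 0) x + \<phi> (\<lambda>x. 0) x)" by simp
  then have "\<And>x. \<phi> (\<lambda>x. 0) x = \<phi> (\<lambda>x. 0) x + \<phi> (\<lambda>x. 0) x" by meson
  then show ?thesis by auto
qed

lemma aut_expand_sub:
  assumes \<phi>: "\<phi> \<in> alg_auts \<O> G" and a: "a \<in> OA" and S: "S \<subseteq> carrier G"
  shows "\<phi> (\<lambda>y. \<Sum>x\<in>S. a x * dl x y) = (\<lambda>y. \<Sum>x\<in>S. a x * \<phi> (dl x) y)"
proof -
  have "finite S" using S fin finite_subset by blast
  then show ?thesis using S
  proof (induction S rule: finite_induct)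
    case empty then show ?case using aut_zero[OF \<phi>] by simp
  next
    case (insert z F)
    have z: "z \<in> carrier G" and F: "F \<subseteq> carrier G" using insert by auto
    have az: "a z \<in> \<O>" using a z by (simp add: OA_iff)
    have m1: "(\<lambda>y. a z * dl z y) \<in> OA" using OA_smult[OF az OA_dl[OF z]] .
    have m2: "(\<lambda>y. \<Sum>x\<in>F. a x * dl x y) \<in> OA"
      using F a by (intro OA_sum OA_smult OA_dl) (auto simp: OA_iff)
    have "\<phi> (\<lambda>y. \<Sum>x\<in>insert z F. a x * dl x y) = \<phi> (\<lambda>y. a z * dl z y + (\<Sum>x\<in>F. a x * dl x y))"
      using insert by simp
    also have "\<dots> = (\<lambda>y. \<phi> (\<lambda>y. a z * dl z y) y + \<phi> (\<lambda>y. \<Sum>x\<in>F. a x * dl x y) y)"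
      using aut_add[OF \<phi> m1 m2] by simp
    also have "\<phi> (\<lambda>y. a z * dl z y) = (\<lambda>y. a z * \<phi> (dl z) y)"
      using aut_smult[OF \<phi> az OA_dl[OF z]] by simp
    also have "\<phi> (\<lambda>y. \<Sum>x\<in>F. a x * dl x y) = (\<lambda>y. \<Sum>x\<in>F. a x * \<phi> (dl x) y)" using insert F by blast
    finally show ?case using insert by simp
  qed
qed

lemma OA_expand: "a \<in> OA \<Longrightarrow> a = (\<lambda>y. \<Sum>x\<in>carrier G. a x * dl x y)"
proof
  fix y assume a: "a \<in> OA"
  show "a y = (\<Sum>x\<in>carrier G. a x * dl x y)"
  proof (cases "y \<in> carrier G")
    case True
    have "(\<Sum>x\<in>carrier G. a x * dl x y) = (\<Sum>x\<in>carrier G. if x = y then a x else 0)"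
      by (intro sum.cong) (auto simp: dl_def)
    then show ?thesis using True fin by simp
  next
    case False
    have "(\<Sum>x\<in>carrier G. a x * dl x y) = 0" using False by (intro sum.neutral) (auto simp: dl_def)
    then show ?thesis using a False by (auto simp: OA_iff supp0_def)
  qed
qed

lemma aut_expand:
  assumes \<phi>: "\<phi> \<in> alg_auts \<O> G" and a: "a \<in> OA"
  shows "\<phi> a = (\<lambda>y. \<Sum>x\<in>carrier G. a x * \<phi> (dl x) y)"
  using aut_expand_sub[OF \<phi> a order_refl] OA_expand[OF a] by simp

lemma aut_eqI:
  assumes "\<phi> \<in> alg_auts \<O> G" "\<psi> \<in> alg_auts \<O> G" "\<forall>g\<in>carrier G. \<phi> (dl g) = \<psi> (dl g)"
  shows "\<phi> = \<psi>"
proof (rule extensionalityI[where A = OA])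
  show "\<phi> \<in> extensional OA" "\<psi> \<in> extensional OA" using assms by (auto simp: alg_auts_def)
  fix a assume "a \<in> OA"
  then show "\<phi> a = \<psi> a" using assms by (simp add: aut_expand)
qed

end


lemma group_C2: "group C2"
proof (rule groupI)
  show "\<And>x y. x \<in> carrier C2 \<Longrightarrow> y \<in> carrier C2 \<Longrightarrow> x \<otimes>\<^bsub>C2\<^esub> y \<in> carrier C2" by (auto simp: C2_def)
  show "\<one>\<^bsub>C2\<^esub> \<in> carrier C2" by (simp add: C2_def)
  show "\<And>x y z. x \<in> carrier C2 \<Longrightarrow> y \<in> carrier C2 \<Longrightarrow> z \<in> carrier C2 \<Longrightarrow>
    x \<otimes>\<^bsub>C2\<^esub> y \<otimes>\<^bsub>C2\<^esub> z = x \<otimes>\<^bsub>C2\<^esub> (y \<otimes>\<^bsub>C2\<^esub> z)" by (simp add: C2_def)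
  show "\<And>x. x \<in> carrier C2 \<Longrightarrow> \<one>\<^bsub>C2\<^esub> \<otimes>\<^bsub>C2\<^esub> x = x" by (simp add: C2_def)
  show "\<And>x. x \<in> carrier C2 \<Longrightarrow> \<exists>y\<in>carrier C2. y \<otimes>\<^bsub>C2\<^esub> x = \<one>\<^bsub>C2\<^esub>" by (auto simp: C2_def)
qed

context cgO
begin

definition ainv :: "(('g \<Rightarrow> 'k) \<Rightarrow> ('g \<Rightarrow> 'k)) \<Rightarrow> ('g \<Rightarrow> 'k) \<Rightarrow> ('g \<Rightarrow> 'k)" where
  "ainv \<phi> = restrict (inv_into OA \<phi>) OA"

lemma ainv_props:
  assumes \<phi>: "\<phi> \<in> alg_auts \<O> G"
  shows "\<And>a. a \<in> OA \<Longrightarrow> ainv \<phi> a \<in> OA" "\<And>a. a \<in> OA \<Longrightarrow> \<phi> (ainv \<phi> a) = a"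
    "\<And>a. a \<in> OA \<Longrightarrow> ainv \<phi> (\<phi> a) = a"
proof -
  have b: "bij_betw \<phi> OA OA" using aut_bij[OF \<phi>] .
  show "\<And>a. a \<in> OA \<Longrightarrow> ainv \<phi> a \<in> OA"
    using bij_betw_inv_into[OF b] by (simp add: ainv_def bij_betwE)
  show "\<And>a. a \<in> OA \<Longrightarrow> \<phi> (ainv \<phi> a) = a"
    using b by (simp add: ainv_def bij_betw_inv_into_right)
  show "\<And>a. a \<in> OA \<Longrightarrow> ainv \<phi> (\<phi> a) = a"
    using b aut_OA[OF \<phi>] by (simp add: ainv_def bij_betw_inv_into_left)
qed

lemma ainv_aut:
  assumes \<phi>: "\<phi> \<in> alg_auts \<O> G"
  shows "ainv \<phi> \<in> alg_auts \<O> G"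
proof -
  note P = ainv_props[OF \<phi>]
  let ?\<psi> = "ainv \<phi>"
  have bij: "bij_betw ?\<psi> OA OA"
    by (rule bij_betw_byWitness[where f' = \<phi>]) (use P aut_OA[OF \<phi>] in auto)
  have add: "?\<psi> (\<lambda>x. a x + b x) = (\<lambda>x. ?\<psi> a x + ?\<psi> b x)" if a: "a \<in> OA" and b: "b \<in> OA" for a b
  proof -
    have "\<phi> (\<lambda>x. ?\<psi> a x + ?\<psi> b x) = (\<lambda>x. a x + b x)"
      using aut_add[OF \<phi> P(1)[OF a] P(1)[OF b]] P(2)[OF a] P(2)[OF b] by simp
    then show ?thesis using P(3)[OF OA_add[OF P(1)[OF a] P(1)[OF b]]] by simp
  qed
  have sm: "?\<psi> (\<lambda>x. c * a x) = (\<lambda>x. c * ?\<psi> a x)" if c: "c \<in> \<O>" and a: "a \<in> OA" for c a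
  proof -
    have "\<phi> (\<lambda>x. c * ?\<psi> a x) = (\<lambda>x. c * a x)"
      using aut_smult[OF \<phi> c P(1)[OF a]] P(2)[OF a] by simp
    then show ?thesis using P(3)[OF OA_smult[OF c P(1)[OF a]]] by simp
  qed
  have mul: "?\<psi> (grp_alg_mult G a b) = grp_alg_mult G (?\<psi> a) (?\<psi> b)" if a: "a \<in> OA" and b: "b \<in> OA" for a b
  proof -
    have "\<phi> (grp_alg_mult G (?\<psi> a) (?\<psi> b)) = grp_alg_mult G a b"
      using aut_mult[OF \<phi> P(1)[OF a] P(1)[OF b]] P(2)[OF a] P(2)[OF b] by simp
    then show ?thesis using P(3)[OF OA_mult[OF P(1)[OF a] P(1)[OF b]]] by simp
  qed
  have one: "?\<psi> (grp_alg_one G) = grp_alg_one G"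
    using P(3)[OF OA_one] aut_one[OF \<phi>] by simp
  show ?thesis unfolding alg_auts_def using bij add sm mul one by (simp add: ainv_def)
qed

lemma comp_aut:
  assumes \<phi>: "\<phi> \<in> alg_auts \<O> G" and \<psi>: "\<psi> \<in> alg_auts \<O> G"
  shows "compose OA \<phi> \<psi> \<in> alg_auts \<O> G"
proof -
  have bij: "bij_betw (compose OA \<phi> \<psi>) OA OA" using bij_betw_compose[OF aut_bij[OF \<psi>] aut_bij[OF \<phi>]] .
  have add: "compose OA \<phi> \<psi> (\<lambda>x. a x + b x) = (\<lambda>x. compose OA \<phi> \<psi> a x + compose OA \<phi> \<psi> b x)"
    if a: "a \<in> OA" and b: "b \<in> OA" for a b
    using a b OA_add[OF a b] aut_add[OF \<psi> a b] aut_add[OF \<phi> aut_OA[OF \<psi> a] aut_OA[OF \<psi> b]]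
    by (simp add: compose_eq)
  have sm: "compose OA \<phi> \<psi> (\<lambda>x. c * a x) = (\<lambda>x. c * compose OA \<phi> \<psi> a x)" if c: "c \<in> \<O>" and a: "a \<in> OA" for c a
    using a OA_smult[OF c a] aut_smult[OF \<psi> c a] aut_smult[OF \<phi> c aut_OA[OF \<psi> a]]
    by (simp add: compose_eq)
  have mul: "compose OA \<phi> \<psi> (grp_alg_mult G a b) = grp_alg_mult G (compose OA \<phi> \<psi> a) (compose OA \<phi> \<psi> b)"
    if a: "a \<in> OA" and b: "b \<in> OA" for a b
    using a b OA_mult[OF a b] aut_mult[OF \<psi> a b] aut_mult[OF \<phi> aut_OA[OF \<psi> a] aut_OA[OF \<psi> b]]
    by (simp add: compose_eq)
  have one: "compose OA \<phi> \<psi> (grp_alg_one G) = grp_alg_one G"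
    using OA_one aut_one[OF \<psi>] aut_one[OF \<phi>] by (simp add: compose_eq)
  show ?thesis unfolding alg_auts_def using bij add sm mul one by simp
qed

lemma id_aut: "restrict id OA \<in> alg_auts \<O> G"
  unfolding alg_auts_def using OA_add OA_smult OA_mult OA_one
  by (auto simp: bij_betw_def inj_on_def)

lemma group_Aut: "group (Aut_alg \<O> G)"
proof (rule groupI)
  show "\<And>x y. x \<in> carrier (Aut_alg \<O> G) \<Longrightarrow> y \<in> carrier (Aut_alg \<O> G) \<Longrightarrow> x \<otimes>\<^bsub>Aut_alg \<O> G\<^esub> y \<in> carrier (Aut_alg \<O> G)"
    by (simp add: Aut_alg_def comp_aut)
  show "\<one>\<^bsub>Aut_alg \<O> G\<^esub> \<in> carrier (Aut_alg \<O> G)" by (simp add: Aut_alg_def id_aut)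
  show "\<And>x y z. x \<in> carrier (Aut_alg \<O> G) \<Longrightarrow> y \<in> carrier (Aut_alg \<O> G) \<Longrightarrow> z \<in> carrier (Aut_alg \<O> G) \<Longrightarrow>
    x \<otimes>\<^bsub>Aut_alg \<O> G\<^esub> y \<otimes>\<^bsub>Aut_alg \<O> G\<^esub> z = x \<otimes>\<^bsub>Aut_alg \<O> G\<^esub> (y \<otimes>\<^bsub>Aut_alg \<O> G\<^esub> z)"
  proof -
    fix x y z assume "x \<in> carrier (Aut_alg \<O> G)" "y \<in> carrier (Aut_alg \<O> G)" "z \<in> carrier (Aut_alg \<O> G)"
    then have z: "z \<in> OA \<rightarrow> OA" and y: "y \<in> OA \<rightarrow> OA"
      by (auto simp: Aut_alg_def intro: aut_OA)
    show "x \<otimes>\<^bsub>Aut_alg \<O> G\<^esub> y \<otimes>\<^bsub>Aut_alg \<O> G\<^esub> z = x \<otimes>\<^bsub>Aut_alg \<O> G\<^esub> (y \<otimes>\<^bsub>Aut_alg \<O> G\<^esub> z)"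
      by (simp add: Aut_alg_def compose_assoc[OF z])
  qed
  show "\<And>x. x \<in> carrier (Aut_alg \<O> G) \<Longrightarrow> \<one>\<^bsub>Aut_alg \<O> G\<^esub> \<otimes>\<^bsub>Aut_alg \<O> G\<^esub> x = x"
  proof -
    fix x assume "x \<in> carrier (Aut_alg \<O> G)"
    then have x: "x \<in> alg_auts \<O> G" by (simp add: Aut_alg_def)
    show "\<one>\<^bsub>Aut_alg \<O> G\<^esub> \<otimes>\<^bsub>Aut_alg \<O> G\<^esub> x = x"
      unfolding Aut_alg_def
      by (rule extensionalityI[where A = OA]) (use x aut_ext aut_OA in \<open>auto simp: compose_eq\<close>)
  qed
  show "\<And>x. x \<in> carrier (Aut_alg \<O> G) \<Longrightarrow> \<exists>y\<in>carrier (Aut_alg \<O> G). y \<otimes>\<^bsub>Aut_alg \<O> G\<^esub> x = \<one>\<^bsub>Aut_alg \<O> G\<^esub>"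
  proof -
    fix x assume "x \<in> carrier (Aut_alg \<O> G)"
    then have x: "x \<in> alg_auts \<O> G" by (simp add: Aut_alg_def)
    have "compose OA (ainv x) x = restrict id OA"
      by (rule extensionalityI[where A = OA]) (use ainv_props[OF x] in \<open>auto simp: compose_eq\<close>)
    then show "\<exists>y\<in>carrier (Aut_alg \<O> G). y \<otimes>\<^bsub>Aut_alg \<O> G\<^esub> x = \<one>\<^bsub>Aut_alg \<O> G\<^esub>"
      using ainv_aut[OF x] by (auto simp: Aut_alg_def)
  qed
qed

end

context cgO
begin

definition tau :: "(('g \<Rightarrow> 'k) \<Rightarrow> ('g \<Rightarrow> 'k)) \<Rightarrow> ('g \<Rightarrow> 'k) \<Rightarrow> ('g \<Rightarrow> 'k)" where
  "tau \<alpha> \<chi> = (\<lambda>g. if g \<in> carrier G then fh \<chi> (\<alpha> (dl g)) else 0)"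

definition Fm :: "(('g \<Rightarrow> 'k) \<Rightarrow> ('g \<Rightarrow> 'k)) \<Rightarrow> int \<Rightarrow> ('g \<Rightarrow> 'k) \<Rightarrow> ('g \<Rightarrow> 'k)" where
  "Fm \<alpha> s = restrict (\<lambda>f g. if g \<in> carrier G then of_int s * fh f (\<alpha> (dl g)) else 0) Z"

lemma fh_add_left: "fh (\<lambda>x. f x + f' x) a = fh f a + fh f' a"
  by (simp add: fh_def algebra_simps sum.distrib)

lemma tau_Ch:
  assumes \<alpha>: "\<alpha> \<in> alg_auts \<O> G" and c: "\<chi> \<in> Ch"
  shows "tau \<alpha> \<chi> \<in> Ch"
proof -
  have m: "tau \<alpha> \<chi> (x \<otimes> y) = tau \<alpha> \<chi> x * tau \<alpha> \<chi> y" if x: "x \<in> carrier G" and y: "y \<in> carrier G" for x y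
  proof -
    have "\<alpha> (dl (x \<otimes> y)) = grp_alg_mult G (\<alpha> (dl x)) (\<alpha> (dl y))"
      using aut_mult[OF \<alpha> OA_dl[OF x] OA_dl[OF y]] dl_mult[OF x y] by simp
    then have "fh \<chi> (\<alpha> (dl (x \<otimes> y))) = fh \<chi> (\<alpha> (dl x)) * fh \<chi> (\<alpha> (dl y))"
      using fh_mult[OF c] by simp
    moreover have "x \<otimes> y \<in> carrier G" using x y by simp
    ultimately show ?thesis using x y unfolding tau_def by (simp only: if_P)
  qed
  have a1: "\<alpha> (dl \<one>) = dl \<one>" using aut_one[OF \<alpha>] by (simp add: dl_one)
  have o: "tau \<alpha> \<chi> \<one> = 1"
    using a1 by (simp add: tau_def fh_dl ch_one[OF c])
  have z: "tau \<alpha> \<chi> x = 0" if "x \<notin> carrier G" for x using that by (simp add: tau_def)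
  show ?thesis unfolding lin_chars_def mem_Collect_eq using m o z by blast
qed

lemma fh_aut:
  assumes \<alpha>: "\<alpha> \<in> alg_auts \<O> G" and a: "a \<in> OA"
  shows "fh f (\<alpha> a) = fh (\<lambda>g. if g \<in> carrier G then fh f (\<alpha> (dl g)) else 0) a"
proof -
  have "fh f (\<alpha> a) = fh f (\<lambda>y. \<Sum>x\<in>carrier G. a x * \<alpha> (dl x) y)" using aut_expand[OF \<alpha> a] by simp
  also have "\<dots> = (\<Sum>x\<in>carrier G. a x * fh f (\<alpha> (dl x)))" by (rule fh_sum_right)
  finally show ?thesis by (simp add: fh_def)
qed

lemma fh_aut_tau: "\<alpha> \<in> alg_auts \<O> G \<Longrightarrow> a \<in> OA \<Longrightarrow> fh \<chi> (\<alpha> a) = fh (tau \<alpha> \<chi>) a"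
  using fh_aut by (simp add: tau_def)

lemma tau_bij:
  assumes \<alpha>: "\<alpha> \<in> alg_auts \<O> G"
  shows "bij_betw (tau \<alpha>) Ch Ch"
proof -
  have inj: "inj_on (tau \<alpha>) Ch"
  proof (rule inj_onI)
    fix \<chi> \<chi>' assume c: "\<chi> \<in> Ch" and c': "\<chi>' \<in> Ch" and e: "tau \<alpha> \<chi> = tau \<alpha> \<chi>'"
    have A: "fh \<chi> (\<alpha> a) = fh \<chi>' (\<alpha> a)" if "a \<in> OA" for a
      using e fh_aut_tau[OF \<alpha> that] by simp
    have all: "\<forall>b\<in>OA. fh \<chi> b = fh \<chi>' b"
    proof
      fix b assume b: "b \<in> OA"
      then show "fh \<chi> b = fh \<chi>' b" using A[OF ainv_props(1)[OF \<alpha> b]] ainv_props(2)[OF \<alpha> b] by simp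
    qed
    show "\<chi> = \<chi>'"
    proof
      fix g show "\<chi> g = \<chi>' g"
        using all OA_dl[of g] fh_dl[of g] ch_out[OF c] ch_out[OF c'] by (cases "g \<in> carrier G") auto
    qed
  qed
  moreover have "tau \<alpha> ` Ch \<subseteq> Ch" using tau_Ch[OF \<alpha>] by blast
  ultimately show ?thesis using fin_Ch by (simp add: bij_betw_def endo_inj_surj)
qed

lemma Fm_zc:
  "Fm \<alpha> s (zc a) = (\<lambda>g. \<Sum>\<chi>\<in>Ch. of_int (s * a \<chi>) * tau \<alpha> \<chi> g)"
proof -
  have "zc a \<in> Z" using Z_iff by blast
  moreover have "fh (zc a) b = (\<Sum>\<chi>\<in>Ch. of_int (a \<chi>) * fh \<chi> b)" for b
    unfolding zc_def by (rule fh_sum_left)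
  ultimately show ?thesis
    by (auto simp: Fm_def tau_def sum_distrib_left mult_ac)
qed

lemma Fm_Z: assumes \<alpha>: "\<alpha> \<in> alg_auts \<O> G" and f: "f \<in> Z" shows "Fm \<alpha> s f \<in> Z"
proof -
  obtain a where "f = zc a" using f Z_iff by blast
  then show ?thesis using Fm_zc zc_perm[OF tau_bij[OF \<alpha>], of "\<lambda>\<chi>. s * a \<chi>"] by simp
qed

lemma Fm_char: assumes "\<chi> \<in> Ch" shows "Fm \<alpha> s \<chi> = (\<lambda>g. of_int s * tau \<alpha> \<chi> g)"
  using Ch_Z[OF assms] by (auto simp: Fm_def tau_def)

lemma Fm_comp:
  assumes \<alpha>: "\<alpha> \<in> alg_auts \<O> G" and \<beta>: "\<beta> \<in> alg_auts \<O> G" and f: "f \<in> Z"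
  shows "Fm \<alpha> s (Fm \<beta> t f) = Fm (compose OA \<beta> \<alpha>) (s * t) f"
proof
  fix g
  show "Fm \<alpha> s (Fm \<beta> t f) g = Fm (compose OA \<beta> \<alpha>) (s * t) f g"
  proof (cases "g \<in> carrier G")
    case False then show ?thesis using f Fm_Z[OF \<beta> f] by (simp add: Fm_def)
  next
    case True
    have aO: "\<alpha> (dl g) \<in> OA" using aut_OA[OF \<alpha> OA_dl[OF True]] .
    have "fh (Fm \<beta> t f) (\<alpha> (dl g)) = (\<Sum>x\<in>carrier G. \<alpha> (dl g) x * (of_int t * fh f (\<beta> (dl x))))"
      using f by (simp add: fh_def Fm_def)
    also have "\<dots> = of_int t * fh (\<lambda>x. if x \<in> carrier G then fh f (\<beta> (dl x)) else 0) (\<alpha> (dl g))"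
      by (simp add: fh_def sum_distrib_left mult_ac)
    also have "\<dots> = of_int t * fh f (\<beta> (\<alpha> (dl g)))" using fh_aut[OF \<beta> aO] by simp
    finally show ?thesis using True f Fm_Z[OF \<beta> f] OA_dl[OF True]
      by (simp add: Fm_def compose_eq)
  qed
qed

lemma Fm_id: assumes f: "f \<in> Z" shows "Fm (restrict id OA) 1 f = f"
proof
  fix g show "Fm (restrict id OA) 1 f g = f g"
    using f Z_supp[OF f] OA_dl[of g] by (auto simp: Fm_def fh_dl supp0_def)
qed

lemma inner_scale: "char_inner G (\<lambda>x. c * f x) (\<lambda>x. d * f' x) = c * d * char_inner G f f'"
  by (simp add: char_inner_def sum_distrib_left sum_divide_distrib mult_ac)

lemma cent: "g \<in> carrier G \<Longrightarrow> centralizer_grp G g = carrier G"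
  by (auto simp: centralizer_grp_def m_comm)

lemma Fm_mu:
  assumes \<alpha>: "\<alpha> \<in> alg_auts \<O> G" and g: "g \<in> carrier G" and h: "h \<in> carrier G"
  shows "mu_of G (Fm \<alpha> s) g h = of_int s * of_nat n * \<alpha> (dl g) h"
proof -
  have "mu_of G (Fm \<alpha> s) g h = (\<Sum>\<chi>\<in>Ch. of_int s * (fh \<chi> (\<alpha> (dl g)) * \<chi> (inv h)))"
    unfolding mu_of_def using g by (intro sum.cong refl) (simp add: Fm_char tau_def)
  also have "\<dots> = of_int s * (\<Sum>\<chi>\<in>Ch. fh \<chi> (\<alpha> (dl g)) * \<chi> (inv h))" by (simp add: sum_distrib_left)
  also have "\<dots> = of_int s * (of_nat n * \<alpha> (dl g) h)"
    using fourier_inv[OF OA_supp[OF aut_OA[OF \<alpha> OA_dl[OF g]]] h] by simp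
  finally show ?thesis by (simp add: mult.assoc)
qed

lemma Fm_perf:
  assumes \<alpha>: "\<alpha> \<in> alg_auts \<O> G" and s: "s \<in> {1, -1}"
  shows "Fm \<alpha> s \<in> perf_isometries p \<O> G"
proof -
  have \<alpha>': "ainv \<alpha> \<in> alg_auts \<O> G" using ainv_aut[OF \<alpha>] .
  have comp1: "compose OA (ainv \<alpha>) \<alpha> = restrict id OA"
    by (rule extensionalityI[where A = OA]) (use ainv_props[OF \<alpha>] in \<open>auto simp: compose_eq\<close>)
  have comp2: "compose OA \<alpha> (ainv \<alpha>) = restrict id OA"
    by (rule extensionalityI[where A = OA]) (use ainv_props[OF \<alpha>] in \<open>auto simp: compose_eq\<close>)
  have ss: "s * s = 1" using s by auto
  have bij: "bij_betw (Fm \<alpha> s) Z Z"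
  proof (rule bij_betw_byWitness[where f' = "Fm (ainv \<alpha>) s"])
    show "\<forall>a\<in>Z. Fm (ainv \<alpha>) s (Fm \<alpha> s a) = a"
      using Fm_comp[OF \<alpha>' \<alpha>] comp2 ss Fm_id by simp
    show "\<forall>a\<in>Z. Fm \<alpha> s (Fm (ainv \<alpha>) s a) = a"
      using Fm_comp[OF \<alpha> \<alpha>'] comp1 ss Fm_id by simp
    show "Fm \<alpha> s ` Z \<subseteq> Z" using Fm_Z[OF \<alpha>] by blast
    show "Fm (ainv \<alpha>) s ` Z \<subseteq> Z" using Fm_Z[OF \<alpha>'] by blast
  qed
  have add: "Fm \<alpha> s (\<lambda>x. f x + f' x) = (\<lambda>x. Fm \<alpha> s f x + Fm \<alpha> s f' x)" if "f \<in> Z" "f' \<in> Z" for f f'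
    using that Z_add[OF that] by (auto simp: Fm_def fh_add_left algebra_simps)
  have iso: "char_inner G (Fm \<alpha> s f) (Fm \<alpha> s f') = char_inner G f f'" if f: "f \<in> Z" and f': "f' \<in> Z" for f f'
  proof -
    obtain a b where ab: "f = zc a" "f' = zc b" using f f' Z_iff by blast
    have tb: "inj_on (tau \<alpha>) Ch" "tau \<alpha> ` Ch \<subseteq> Ch" using tau_bij[OF \<alpha>] by (auto simp: bij_betw_def)
    have e1: "Fm \<alpha> s f = (\<lambda>g. \<Sum>\<chi>\<in>Ch. of_int (s * a \<chi>) * tau \<alpha> \<chi> g)" unfolding ab by (rule Fm_zc)
    have e2: "Fm \<alpha> s f' = (\<lambda>g. \<Sum>\<chi>\<in>Ch. of_int (s * b \<chi>) * tau \<alpha> \<chi> g)" unfolding ab by (rule Fm_zc)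
    have "char_inner G (Fm \<alpha> s f) (Fm \<alpha> s f') = of_int (\<Sum>\<chi>\<in>Ch. (s * a \<chi>) * (s * b \<chi>))"
      unfolding e1 e2 by (rule inner_perm[OF tb])
    also have "(\<Sum>\<chi>\<in>Ch. (s * a \<chi>) * (s * b \<chi>)) = (\<Sum>\<chi>\<in>Ch. a \<chi> * b \<chi>)"
      using ss by (intro sum.cong refl) (metis (no_types, lifting) mult.assoc mult.left_commute mult_1)
    finally show ?thesis using inner_zc ab by simp
  qed
  have perf: "perfect p \<O> G (mu_of G (Fm \<alpha> s))"
    unfolding perfect_def
  proof (intro conjI ballI impI)
    fix g h assume g: "g \<in> carrier G" and h: "h \<in> carrier G"
    have sO: "of_int s \<in> \<O>" using s O1 Oneg by auto
    have v: "mu_of G (Fm \<alpha> s) g h / of_nat n = of_int s * \<alpha> (dl g) h" using Fm_mu[OF \<alpha> g h] n_pos by simp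
    have "\<alpha> (dl g) h \<in> \<O>" using aut_OA[OF \<alpha> OA_dl[OF g]] h by (simp add: OA_iff)
    then have "mu_of G (Fm \<alpha> s) g h / of_nat n \<in> \<O>" using v sO Omul by simp
    then show "mu_of G (Fm \<alpha> s) g h / of_nat (card (centralizer_grp G g)) \<in> \<O>"
      "mu_of G (Fm \<alpha> s) g h / of_nat (card (centralizer_grp G h)) \<in> \<O>"
      using cent g h by (simp_all add: Coset.order_def)
  next
    fix g h assume g: "g \<in> carrier G" and h: "h \<in> carrier G" and nz: "mu_of G (Fm \<alpha> s) g h \<noteq> 0"
    have nz': "\<alpha> (dl g) h \<noteq> 0" using nz Fm_mu[OF \<alpha> g h] by auto
    have "g = \<one> \<longleftrightarrow> h = \<one>"
    proof
      assume "g = \<one>"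
      then have "\<alpha> (dl g) = dl \<one>" using aut_one[OF \<alpha>] by (simp add: dl_one)
      then show "h = \<one>" using nz' by (simp add: dl_def split: if_splits)
    next
      assume h1: "h = \<one>"
      show "g = \<one>"
      proof (rule ccontr)
        assume g1: "g \<noteq> \<one>"
        have "of_nat n * \<alpha> (dl g) \<one> = (\<Sum>\<chi>\<in>Ch. fh \<chi> (\<alpha> (dl g)) * \<chi> (inv \<one>))"
          using fourier_inv[OF OA_supp[OF aut_OA[OF \<alpha> OA_dl[OF g]]] one_closed] by simp
        also have "\<dots> = (\<Sum>\<chi>\<in>Ch. tau \<alpha> \<chi> g)" using g by (intro sum.cong refl) (simp add: tau_def ch_one)
        also have "\<dots> = (\<Sum>\<chi>\<in>Ch. \<chi> g)" using sum.reindex_bij_betw[OF tau_bij[OF \<alpha>], of "\<lambda>\<chi>. \<chi> g"] by simp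
        also have "\<dots> = 0" using col_sum[OF g] g1 by simp
        finally have "\<alpha> (dl g) \<one> = 0" using n_pos by simp
        then show False using nz' h1 by simp
      qed
    qed
    then show "p_regular p G g \<longleftrightarrow> p_regular p G h" using reg_iff g h by simp
  qed
  show ?thesis unfolding perf_isometries_def
    using bij add iso perf by (auto simp: Fm_def)
qed

lemma Fm_inj:
  assumes \<alpha>: "\<alpha> \<in> alg_auts \<O> G" and \<beta>: "\<beta> \<in> alg_auts \<O> G" and s: "s \<in> {1, -1}" and t: "t \<in> {1, -1}"
    and e: "Fm \<alpha> s = Fm \<beta> t"
  shows "\<alpha> = \<beta> \<and> s = t"
proof -
  have tz: "triv \<in> Z" using Ch_Z[OF triv_Ch] .
  have v: "Fm \<gamma> u triv \<one> = of_int u" if \<gamma>: "\<gamma> \<in> alg_auts \<O> G" for \<gamma> u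
  proof -
    have a1: "\<gamma> (dl \<one>) = dl \<one>" using aut_one[OF \<gamma>] by (simp add: dl_one)
    then show ?thesis using tz by (simp add: Fm_def fh_dl triv_def)
  qed
  have "(of_int s :: 'k) = of_int t" using v[OF \<alpha>, of s] v[OF \<beta>, of t] e by simp
  then have st: "s = t" by simp
  have s0: "(of_int s :: 'k) \<noteq> 0" using s by auto
  have "\<forall>g\<in>carrier G. \<alpha> (dl g) = \<beta> (dl g)"
  proof
    fix g assume g: "g \<in> carrier G"
    show "\<alpha> (dl g) = \<beta> (dl g)"
    proof (rule fh_inj)
      show "supp0 (\<alpha> (dl g))" "supp0 (\<beta> (dl g))" using aut_OA[OF \<alpha> OA_dl[OF g]] aut_OA[OF \<beta> OA_dl[OF g]] OA_supp by auto
      show "\<forall>\<chi>\<in>Ch. fh \<chi> (\<alpha> (dl g)) = fh \<chi> (\<beta> (dl g))"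
      proof
        fix \<chi> assume c: "\<chi> \<in> Ch"
        have "Fm \<alpha> s \<chi> g = Fm \<beta> t \<chi> g" using e by simp
        then have "of_int s * fh \<chi> (\<alpha> (dl g)) = of_int s * fh \<chi> (\<beta> (dl g))"
          using g c st by (simp add: Fm_char tau_def)
        then show "fh \<chi> (\<alpha> (dl g)) = fh \<chi> (\<beta> (dl g))" using s0 by simp
      qed
    qed
  qed
  then show ?thesis using aut_eqI[OF \<alpha> \<beta>] st by blast
qed

end

context cgO
begin

lemma inner_ch: "\<chi> \<in> Ch \<Longrightarrow> \<psi> \<in> Ch \<Longrightarrow> char_inner G \<chi> \<psi> = (if \<chi> = \<psi> then 1 else 0)"
  using orth_row n_pos by (simp add: char_inner_def)

context
  fixes I assumes I: "I \<in> perf_isometries p \<O> G"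
begin

lemma I_Z: "f \<in> Z \<Longrightarrow> I f \<in> Z"
  using I unfolding perf_isometries_def using bij_betwE by blast
lemma I_add: "f \<in> Z \<Longrightarrow> g \<in> Z \<Longrightarrow> I (\<lambda>x. f x + g x) = (\<lambda>x. I f x + I g x)"
  using I unfolding perf_isometries_def by blast
lemma I_inner: "f \<in> Z \<Longrightarrow> g \<in> Z \<Longrightarrow> char_inner G (I f) (I g) = char_inner G f g"
  using I unfolding perf_isometries_def by blast
lemma I_perf: "perfect p \<O> G (mu_of G I)"
  using I unfolding perf_isometries_def by blast
lemma I_ext: "I \<in> extensional Z"
  using I unfolding perf_isometries_def by blast

lemma I_zero: "I (\<lambda>x. 0) = (\<lambda>x. 0)"
proof -
  have "I (\<lambda>x. (\<lambda>x. 0) x + (\<lambda>x. 0) x) = (\<lambda>x. I (\<lambda>x. 0) x + I (\<lambda>x. 0) x)"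
    using I_add[OF Z_zero Z_zero] .
  then have "(\<lambda>x. I (\<lambda>x. 0) x) = (\<lambda>x. I (\<lambda>x. 0) x + I (\<lambda>x. 0) x)" by simp
  then have "\<And>x. I (\<lambda>x. 0) x = I (\<lambda>x. 0) x + I (\<lambda>x. 0) x" by meson
  then show ?thesis by auto
qed

lemma I_neg: assumes f: "f \<in> Z" shows "I (\<lambda>x. - f x) = (\<lambda>x. - I f x)"
proof -
  have "I (\<lambda>x. f x + (\<lambda>x. - f x) x) = (\<lambda>x. I f x + I (\<lambda>x. - f x) x)"
    using I_add[OF f Z_neg[OF f]] .
  then have "(\<lambda>x. 0) = (\<lambda>x. I f x + I (\<lambda>x. - f x) x)" using I_zero by simp
  then have "\<And>x. 0 = I f x + I (\<lambda>x. - f x) x" by meson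
  then have "\<And>x. I (\<lambda>x. - f x) x = - I f x" by (metis add_eq_0_iff)
  then show ?thesis by auto
qed

lemma I_smult_nat: assumes f: "f \<in> Z" shows "I (\<lambda>x. of_nat k * f x) = (\<lambda>x. of_nat k * I f x)"
proof (induction k)
  case 0 then show ?case using I_zero by simp
next
  case (Suc k)
  have m: "(\<lambda>x. of_nat k * f x) \<in> Z" using Z_smult[OF f, of "int k"] by simp
  have "I (\<lambda>x. of_nat (Suc k) * f x) = I (\<lambda>x. (\<lambda>x. of_nat k * f x) x + f x)"
    by (simp add: algebra_simps)
  also have "\<dots> = (\<lambda>x. I (\<lambda>x. of_nat k * f x) x + I f x)" by (rule I_add[OF m f])
  finally show ?case using Suc by (simp add: algebra_simps)
qed

lemma I_smult: assumes f: "f \<in> Z" shows "I (\<lambda>x. of_int k * f x) = (\<lambda>x. of_int k * I f x)"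
proof (cases "k \<ge> 0")
  case True
  define m where "m = nat k"
  have "k = int m" using True by (simp add: m_def)
  then show ?thesis using I_smult_nat[OF f, of m] by simp
next
  case False
  define m where "m = nat (- k)"
  have km: "k = - int m" using False by (simp add: m_def)
  have m: "(\<lambda>x. of_nat m * f x) \<in> Z" using Z_smult[OF f, of "int m"] by simp
  have "I (\<lambda>x. of_int k * f x) = I (\<lambda>x. - (\<lambda>x. of_nat m * f x) x)" by (simp add: km)
  also have "\<dots> = (\<lambda>x. - I (\<lambda>x. of_nat m * f x) x)" by (rule I_neg[OF m])
  finally show ?thesis using I_smult_nat[OF f, of m] by (simp add: km)
qed

lemma I_sum_sub:
  assumes S: "S \<subseteq> Ch"
  shows "I (\<lambda>x. \<Sum>\<chi>\<in>S. of_int (a \<chi>) * \<chi> x) = (\<lambda>x. \<Sum>\<chi>\<in>S. of_int (a \<chi>) * I \<chi> x)"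
proof -
  have "finite S" using S fin_Ch finite_subset by blast
  then show ?thesis using S
  proof (induction S rule: finite_induct)
    case empty then show ?case using I_zero by simp
  next
    case (insert z F)
    have z: "z \<in> Ch" and F: "F \<subseteq> Ch" using insert by auto
    have m1: "(\<lambda>x. of_int (a z) * z x) \<in> Z" using Z_smult[OF Ch_Z[OF z]] .
    have m2: "(\<lambda>x. \<Sum>\<chi>\<in>F. of_int (a \<chi>) * \<chi> x) \<in> Z" using Z_sub[OF F] .
    have "I (\<lambda>x. \<Sum>\<chi>\<in>insert z F. of_int (a \<chi>) * \<chi> x)
        = I (\<lambda>x. (\<lambda>x. of_int (a z) * z x) x + (\<lambda>x. \<Sum>\<chi>\<in>F. of_int (a \<chi>) * \<chi> x) x)"
      using insert by simp
    also have "\<dots> = (\<lambda>x. I (\<lambda>x. of_int (a z) * z x) x + I (\<lambda>x. \<Sum>\<chi>\<in>F. of_int (a \<chi>) * \<chi> x) x)"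
      by (rule I_add[OF m1 m2])
    also have "I (\<lambda>x. of_int (a z) * z x) = (\<lambda>x. of_int (a z) * I z x)" by (rule I_smult[OF Ch_Z[OF z]])
    also have "I (\<lambda>x. \<Sum>\<chi>\<in>F. of_int (a \<chi>) * \<chi> x) = (\<lambda>x. \<Sum>\<chi>\<in>F. of_int (a \<chi>) * I \<chi> x)"
      using insert F by blast
    finally show ?case using insert by simp
  qed
qed

lemma I_zc: "I (zc a) = (\<lambda>x. \<Sum>\<chi>\<in>Ch. of_int (a \<chi>) * I \<chi> x)"
  unfolding zc_def by (rule I_sum_sub) simp

definition eps where "eps \<chi> = I \<chi> \<one>"
definition sg where "sg \<chi> = (\<lambda>x. eps \<chi> * I \<chi> x)"

lemma I_char:
  assumes c: "\<chi> \<in> Ch"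
  shows "(eps \<chi> = 1 \<or> eps \<chi> = -1) \<and> sg \<chi> \<in> Ch \<and> I \<chi> = (\<lambda>x. eps \<chi> * sg \<chi> x)"
proof -
  have "char_inner G (I \<chi>) (I \<chi>) = 1" using I_inner[OF Ch_Z[OF c] Ch_Z[OF c]] inner_ch[OF c c] by simp
  then obtain \<psi> where \<psi>: "\<psi> \<in> Ch" "I \<chi> = \<psi> \<or> I \<chi> = (\<lambda>x. - \<psi> x)" using norm1 I_Z[OF Ch_Z[OF c]] by blast
  then show ?thesis
  proof (elim disjE)
    assume e: "I \<chi> = \<psi>"
    then have "eps \<chi> = 1" using ch_one[OF \<psi>(1)] by (simp add: eps_def)
    then show ?thesis using e \<psi>(1) by (simp add: sg_def)
  next
    assume e: "I \<chi> = (\<lambda>x. - \<psi> x)"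
    then have "eps \<chi> = -1" using ch_one[OF \<psi>(1)] by (simp add: eps_def)
    then show ?thesis using e \<psi>(1) by (simp add: sg_def)
  qed
qed

lemma sg_bij: "bij_betw sg Ch Ch"
proof -
  have inj: "inj_on sg Ch"
  proof (rule inj_onI)
    fix \<chi> \<chi>' assume c: "\<chi> \<in> Ch" and c': "\<chi>' \<in> Ch" and e: "sg \<chi> = sg \<chi>'"
    have "char_inner G (I \<chi>) (I \<chi>') = eps \<chi> * eps \<chi>' * char_inner G (sg \<chi>) (sg \<chi>')"
      using I_char[OF c] I_char[OF c'] inner_scale by metis
    also have "\<dots> = eps \<chi> * eps \<chi>'" using e inner_ch I_char[OF c'] by simp
    finally have "char_inner G \<chi> \<chi>' \<noteq> 0" using I_inner[OF Ch_Z[OF c] Ch_Z[OF c']] I_char[OF c] I_char[OF c'] by auto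
    then show "\<chi> = \<chi>'" using inner_ch[OF c c'] by (simp split: if_splits)
  qed
  moreover have "sg ` Ch \<subseteq> Ch" using I_char by blast
  ultimately show ?thesis using fin_Ch by (simp add: bij_betw_def endo_inj_surj)
qed

lemma mu_I: "g \<in> carrier G \<Longrightarrow> mu_of G I g h = (\<Sum>\<chi>\<in>Ch. eps \<chi> * sg \<chi> g * \<chi> (inv h))"
  unfolding mu_of_def by (intro sum.cong refl) (metis I_char mult.assoc)

lemma eps_const: assumes c: "\<psi> \<in> Ch" shows "eps \<psi> = eps triv"
proof -
  have sg1: "sg \<chi> \<one> = 1" if "\<chi> \<in> Ch" for \<chi> using I_char[OF that] ch_one by blast
  have z: "mu_of G I \<one> h = 0" if h: "h \<in> carrier G" "h \<noteq> \<one>" for h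
  proof (rule ccontr)
    assume "mu_of G I \<one> h \<noteq> 0"
    then have "p_regular p G \<one> \<longleftrightarrow> p_regular p G h" using I_perf h by (simp add: perfect_def)
    then show False using reg_iff h by simp
  qed
  have mu1: "mu_of G I \<one> h = (\<Sum>\<chi>\<in>Ch. eps \<chi> * \<chi> (inv h))" for h
    using mu_I[of \<one> h] sg1 by simp
  have key: "of_nat n * eps \<phi> = (\<Sum>\<chi>\<in>Ch. eps \<chi>)" if d: "\<phi> \<in> Ch" for \<phi>
  proof -
    have "(\<Sum>h\<in>carrier G. mu_of G I \<one> h * \<phi> h) = (\<Sum>h\<in>carrier G. if h = \<one> then mu_of G I \<one> h * \<phi> h else 0)"
      using z by (intro sum.cong refl) auto
    also have "\<dots> = (\<Sum>\<chi>\<in>Ch. eps \<chi>)" using fin mu1[of \<one>] ch_one[OF d] by (simp add: ch_one)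
    finally have A: "(\<Sum>h\<in>carrier G. mu_of G I \<one> h * \<phi> h) = (\<Sum>\<chi>\<in>Ch. eps \<chi>)" .
    have "(\<Sum>h\<in>carrier G. mu_of G I \<one> h * \<phi> h) = (\<Sum>h\<in>carrier G. \<Sum>\<chi>\<in>Ch. eps \<chi> * (\<phi> h * \<chi> (inv h)))"
      by (simp add: mu1 sum_distrib_right sum_distrib_left mult_ac)
    also have "\<dots> = (\<Sum>\<chi>\<in>Ch. \<Sum>h\<in>carrier G. eps \<chi> * (\<phi> h * \<chi> (inv h)))" by (rule sum.swap)
    also have "\<dots> = (\<Sum>\<chi>\<in>Ch. eps \<chi> * (if \<phi> = \<chi> then of_nat n else 0))"
      by (intro sum.cong refl) (simp add: sum_distrib_left[symmetric] orth_row[OF d])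
    also have "\<dots> = (\<Sum>\<chi>\<in>Ch. if \<phi> = \<chi> then eps \<chi> * of_nat n else 0)" by (intro sum.cong refl) auto
    also have "\<dots> = eps \<phi> * of_nat n" using d fin_Ch by simp
    finally show ?thesis using A by (simp add: mult.commute)
  qed
  have "of_nat n * eps \<psi> = of_nat n * eps triv" using key[OF c] key[OF triv_Ch] by simp
  then show ?thesis using n_pos by simp
qed

lemma I_char2: "\<chi> \<in> Ch \<Longrightarrow> I \<chi> = (\<lambda>x. eps triv * sg \<chi> x)"
  using I_char eps_const by metis

lemma eps_pm: "eps triv = 1 \<or> eps triv = -1" using I_char[OF triv_Ch] by blast

lemma sg_integral: "integral sg"
  unfolding integral_def
proof (intro ballI)
  fix g h assume g: "g \<in> carrier G" and h: "h \<in> carrier G"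
  have mu: "mu_of G I g h = eps triv * (\<Sum>\<chi>\<in>Ch. sg \<chi> g * \<chi> (inv h))"
    unfolding mu_of_def by (simp add: I_char2 sum_distrib_left mult.assoc)
  have "mu_of G I g h / of_nat (card (centralizer_grp G g)) \<in> \<O>" using I_perf g h by (simp add: perfect_def)
  then have m: "mu_of G I g h / of_nat n \<in> \<O>" using cent[OF g] by (simp add: Coset.order_def)
  have "Bt sg g h = eps triv * (mu_of G I g h / of_nat n)"
    using h eps_pm by (auto simp: Bt_def mu)
  moreover have "eps triv \<in> \<O>" using eps_pm O1 Oneg by auto
  then have "eps triv * (mu_of G I g h / of_nat n) \<in> \<O>" using Omul m by blast
  ultimately show "Bt sg g h \<in> \<O>" by simp
qed

lemma tau_phi_sg: "\<chi> \<in> Ch \<Longrightarrow> tau (phi sg) \<chi> = sg \<chi>"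
proof
  fix g assume c: "\<chi> \<in> Ch"
  have sc: "sg \<chi> \<in> Ch" using I_char[OF c] by blast
  show "tau (phi sg) \<chi> g = sg \<chi> g"
    using fh_phi[OF sg_bij c OA_dl[of g]] fh_dl[of g] ch_out[OF sc] by (auto simp: tau_def)
qed

lemma I_decomp:
  assumes s: "of_int s = eps triv"
  shows "I = Fm (phi sg) s"
proof (rule extensionalityI[where A = Z])
  show "I \<in> extensional Z" by (rule I_ext)
  show "Fm (phi sg) s \<in> extensional Z" by (simp add: Fm_def)
  fix f assume "f \<in> Z"
  then obtain a where fa: "f = zc a" using Z_iff by blast
  have "I f = (\<lambda>x. \<Sum>\<chi>\<in>Ch. of_int (a \<chi>) * (eps triv * sg \<chi> x))"
    using I_zc fa I_char2 by simp
  also have "\<dots> = (\<lambda>x. \<Sum>\<chi>\<in>Ch. of_int (s * a \<chi>) * tau (phi sg) \<chi> x)"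
    using s by (intro ext sum.cong refl) (simp add: tau_phi_sg)
  also have "\<dots> = Fm (phi sg) s f" using Fm_zc fa by simp
  finally show "I f = Fm (phi sg) s f" .
qed

end

end


theorem (in cgO) main_iso: "Perf p \<O> G \<cong> Aut_alg \<O> G \<times>\<times> C2"
proof -
  interpret A: group "Aut_alg \<O> G" by (rule group_Aut)
  have carA: "carrier (Aut_alg \<O> G) = alg_auts \<O> G" by (simp add: Aut_alg_def)
  have multA: "\<And>x y. x \<otimes>\<^bsub>Aut_alg \<O> G\<^esub> y = compose OA x y" by (simp add: Aut_alg_def)
  have carC: "carrier C2 = {1, -1}" by (simp add: C2_def)
  have multC: "\<And>x y. x \<otimes>\<^bsub>C2\<^esub> y = x * y" by (simp add: C2_def)
  have carP: "carrier (Perf p \<O> G) = perf_isometries p \<O> G" by (simp add: Perf_def)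
  have multP: "\<And>x y. x \<otimes>\<^bsub>Perf p \<O> G\<^esub> y = compose Z x y" by (simp add: Perf_def)
  define \<Psi> where "\<Psi> = (\<lambda>x. Fm (inv\<^bsub>Aut_alg \<O> G\<^esub> (fst x)) (snd x))"
  have invA: "inv\<^bsub>Aut_alg \<O> G\<^esub> \<phi> \<in> alg_auts \<O> G" if "\<phi> \<in> alg_auts \<O> G" for \<phi>
    using A.inv_closed that carA by simp
  have Fm_restr: "restrict (\<lambda>f. Fm \<alpha> s f) Z = Fm \<alpha> s" for \<alpha> s
    by (rule extensionalityI[where A = Z]) (auto simp: Fm_def)
  have hom: "\<Psi> \<in> hom (Aut_alg \<O> G \<times>\<times> C2) (Perf p \<O> G)"
    unfolding hom_def
  proof (intro CollectI conjI ballI)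
    show "\<Psi> \<in> carrier (Aut_alg \<O> G \<times>\<times> C2) \<rightarrow> carrier (Perf p \<O> G)"
      using invA Fm_perf by (auto simp: \<Psi>_def carA carC carP)
  next
    fix x y assume x: "x \<in> carrier (Aut_alg \<O> G \<times>\<times> C2)" and y: "y \<in> carrier (Aut_alg \<O> G \<times>\<times> C2)"
    obtain \<phi> s where xs: "x = (\<phi>, s)" "\<phi> \<in> alg_auts \<O> G" "s \<in> {1, -1}" using x carA carC by auto
    obtain \<psi> t where yt: "y = (\<psi>, t)" "\<psi> \<in> alg_auts \<O> G" "t \<in> {1, -1}" using y carA carC by auto
    have "inv\<^bsub>Aut_alg \<O> G\<^esub> (\<phi> \<otimes>\<^bsub>Aut_alg \<O> G\<^esub> \<psi>) = inv\<^bsub>Aut_alg \<O> G\<^esub> \<psi> \<otimes>\<^bsub>Aut_alg \<O> G\<^esub> inv\<^bsub>Aut_alg \<O> G\<^esub> \<phi>"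
      using xs yt carA by (simp add: A.inv_mult_group)
    then have e: "inv\<^bsub>Aut_alg \<O> G\<^esub> (compose OA \<phi> \<psi>) = compose OA (inv\<^bsub>Aut_alg \<O> G\<^esub> \<psi>) (inv\<^bsub>Aut_alg \<O> G\<^esub> \<phi>)"
      by (simp add: multA)
    have "\<Psi> x \<otimes>\<^bsub>Perf p \<O> G\<^esub> \<Psi> y = restrict (\<lambda>f. Fm (inv\<^bsub>Aut_alg \<O> G\<^esub> \<phi>) s (Fm (inv\<^bsub>Aut_alg \<O> G\<^esub> \<psi>) t f)) Z"
      by (simp add: multP \<Psi>_def xs yt compose_def)
    also have "\<dots> = restrict (\<lambda>f. Fm (compose OA (inv\<^bsub>Aut_alg \<O> G\<^esub> \<psi>) (inv\<^bsub>Aut_alg \<O> G\<^esub> \<phi>)) (s * t) f) Z"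
      using Fm_comp[OF invA[OF xs(2)] invA[OF yt(2)]] by (intro restrict_ext) simp
    also have "\<dots> = \<Psi> (x \<otimes>\<^bsub>Aut_alg \<O> G \<times>\<times> C2\<^esub> y)"
      by (simp add: Fm_restr \<Psi>_def xs yt multA multC e)
    finally show "\<Psi> (x \<otimes>\<^bsub>Aut_alg \<O> G \<times>\<times> C2\<^esub> y) = \<Psi> x \<otimes>\<^bsub>Perf p \<O> G\<^esub> \<Psi> y" by simp
  qed
  have inj: "inj_on \<Psi> (carrier (Aut_alg \<O> G \<times>\<times> C2))"
  proof (rule inj_onI)
    fix x y assume x: "x \<in> carrier (Aut_alg \<O> G \<times>\<times> C2)" and y: "y \<in> carrier (Aut_alg \<O> G \<times>\<times> C2)"
      and e: "\<Psi> x = \<Psi> y"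
    obtain \<phi> s where xs: "x = (\<phi>, s)" "\<phi> \<in> alg_auts \<O> G" "s \<in> {1, -1}" using x carA carC by auto
    obtain \<psi> t where yt: "y = (\<psi>, t)" "\<psi> \<in> alg_auts \<O> G" "t \<in> {1, -1}" using y carA carC by auto
    have "inv\<^bsub>Aut_alg \<O> G\<^esub> \<phi> = inv\<^bsub>Aut_alg \<O> G\<^esub> \<psi> \<and> s = t"
      using Fm_inj[OF invA[OF xs(2)] invA[OF yt(2)] xs(3) yt(3)] e by (simp add: \<Psi>_def xs yt)
    then have "\<phi> = \<psi>" "s = t" using A.inv_inv xs(2) yt(2) carA by metis+
    then show "x = y" using xs yt by simp
  qed
  have surj: "perf_isometries p \<O> G \<subseteq> \<Psi> ` carrier (Aut_alg \<O> G \<times>\<times> C2)"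
  proof
    fix I assume I: "I \<in> perf_isometries p \<O> G"
    define s :: int where "s = (if eps I triv = 1 then 1 else -1)"
    have s: "of_int s = eps I triv" "s \<in> {1, -1}" using eps_pm[OF I] by (auto simp: s_def)
    have ph: "phi (sg I) \<in> alg_auts \<O> G" using phi_aut[OF sg_bij[OF I] sg_integral[OF I]] .
    have "I = Fm (phi (sg I)) s" using I_decomp[OF I s(1)] .
    also have "\<dots> = \<Psi> (inv\<^bsub>Aut_alg \<O> G\<^esub> (phi (sg I)), s)"
      using ph carA by (simp add: \<Psi>_def)
    finally show "I \<in> \<Psi> ` carrier (Aut_alg \<O> G \<times>\<times> C2)"
      using invA[OF ph] s(2) carA carC by force
  qed
  have "\<Psi> ` carrier (Aut_alg \<O> G \<times>\<times> C2) \<subseteq> perf_isometries p \<O> G"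
    using hom carP unfolding hom_def by blast
  then have "bij_betw \<Psi> (carrier (Aut_alg \<O> G \<times>\<times> C2)) (carrier (Perf p \<O> G))"
    using inj surj carP by (auto simp: bij_betw_def)
  then have "\<Psi> \<in> iso (Aut_alg \<O> G \<times>\<times> C2) (Perf p \<O> G)" using hom by (simp add: iso_def)
  then have "Aut_alg \<O> G \<times>\<times> C2 \<cong> Perf p \<O> G" by (rule is_isoI)
  moreover have "group (Aut_alg \<O> G \<times>\<times> C2)" using DirProd_group[OF group_Aut group_C2] .
  ultimately show ?thesis using group.iso_sym by blast
qed

theorem lemma3p2:
  fixes p :: nat and v :: "'k::field_char_0 \<Rightarrow> int" and \<O> :: "'k set"
    and P :: "('g, 'b) monoid_scheme"
  assumes "p_modular_system p v \<O>"
    and "comm_group P" and "finite (carrier P)" and "\<exists>n. order P = p ^ n"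
    and "\<exists>\<zeta>::'k. \<zeta> ^ order P = 1 \<and> (\<forall>k. 0 < k \<longrightarrow> k < order P \<longrightarrow> \<zeta> ^ k \<noteq> 1)"
  shows "Perf p \<O> P \<cong> Aut_alg \<O> P \<times>\<times> C2"
proof -
  obtain N where N: "order P = p ^ N" using assms(4) by blast
  obtain \<zeta> :: 'k where z: "\<zeta> ^ order P = 1" "\<forall>k. 0 < k \<longrightarrow> k < order P \<longrightarrow> \<zeta> ^ k \<noteq> 1" using assms(5) by blast
  have pm: "p_modular_system p v \<O>" by fact
  have pr: "Factorial_Ring.prime p" using pm by (simp add: p_modular_system_def)
  have vm: "\<And>x y. x \<noteq> 0 \<Longrightarrow> y \<noteq> 0 \<Longrightarrow> v (x * y) = v x + v y" using pm by (simp add: p_modular_system_def)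
  have va: "\<And>x y. x \<noteq> 0 \<Longrightarrow> y \<noteq> 0 \<Longrightarrow> x + y \<noteq> 0 \<Longrightarrow> v (x + y) \<ge> min (v x) (v y)"
    using pm by (simp add: p_modular_system_def)
  have Od: "\<O> = {x. x = 0 \<or> v x \<ge> 0}" using pm by (simp add: p_modular_system_def)
  have v1: "v 1 = 0" using vm[of 1 1] by simp
  have vm1: "v (-1) = 0" using vm[of "-1" "-1"] v1 by simp
  have O0: "0 \<in> \<O>" using Od by simp
  have O1: "1 \<in> \<O>" using Od v1 by simp
  have Omul: "x * y \<in> \<O>" if "x \<in> \<O>" "y \<in> \<O>" for x y
    using that vm[of x y] by (cases "x = 0 \<or> y = 0") (auto simp: Od)
  have Oadd: "x + y \<in> \<O>" if "x \<in> \<O>" "y \<in> \<O>" for x y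
  proof (cases "x = 0 \<or> y = 0 \<or> x + y = 0")
    case True then show ?thesis using that Od by auto
  next
    case False
    then have "v (x + y) \<ge> min (v x) (v y)" using va by blast
    then show ?thesis using that False Od by auto
  qed
  have Oneg: "- x \<in> \<O>" if "x \<in> \<O>" for x
  proof -
    have "-1 \<in> \<O>" using Od vm1 by simp
    then show ?thesis using Omul[OF _ that] by (metis mult_minus1)
  qed
  have cgax: "cg_axioms P p N \<zeta>"
    by (rule cg_axioms.intro) (use assms(3) pr N z in auto)
  have Oax: "cgO_axioms \<O>"
    by (rule cgO_axioms.intro) (use O0 O1 Oadd Omul Oneg in auto)
  have "cgO P p N \<zeta> \<O>"
    by (rule cgO.intro[OF cg.intro[OF assms(2) cgax] Oax])
  then interpret C: cgO P p N \<zeta> \<O> .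
  show ?thesis by (rule C.main_iso)
qed


end
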